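(* Let $f$ be a function on $\Omega_+$ depending only on $\zeta_0,\dots,\zeta_{m-1}$ ($m\ge1$), written as $f=\sum_{\gamma\subset\{0,\dots,m-1\}}f_\gamma\Psi_\gamma$. Then $G^{(f)}\in\mathcal H_M$ and $$\|G^{(f)}\|_M\le C\max_{\gamma\subset\{0,\dots,m-1\}}|f_\gamma|\,(1+\mu_* )^m,$$ where $C>0$ is a constant independent of $f$ and $m$.
   Context: Model. Fix $d\ge1$. $(X_t,\xi_t)_{t\in\mathbb{Z}_+}$ is a Markov chain with $X_t\in\mathbb{Z}^d$, $X_0=0$, $\xi_t\in\Omega:=\{-1,+1\}^{\mathbb{Z}^d}$. Given $X_t=x,\xi_t=\bar\xi$, the next position and the next environment are conditionally independent; $P(X_{t+1}=x+u\mid X_t=x,\xi_t=\bar\xi)=P_0(u)+\epsilon c(u)\bar\xi(x)$, where $\epsilon>0$, $P_0$ is an even, finite-range probability distribution on $\mathbb{Z}^d$ with $|\sum_u P_0(u)e^{i(\lambda,u)}|=1$ iff $\lambda=0$ and such that $1/\tilde p_0(\lambda)$ (with $\tilde p_0(\lambda)=\sum_u P_0(u)e^{i(\lambda,u)}$) has absolutely summable Fourier coefficients, and $c$ is an odd finite-range real function with $P_0(u)\pm\epsilon c(u)\in[0,1)$. Given $X_t=x,\xi_t=\bar\xi$, the values $\xi_{t+1}(y)$, $y\in\mathbb{Z}^d$, are independent with $P(\xi_{t+1}(y)=s)=Q_0(\bar\xi(y),s)$ if $y\ne x$ and $Q_1(\bar\xi(y),s)$ if $y=x$, where $Q_0,Q_1$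 are symmetric $2\times2$ stochastic matrices, $Q_0$ has eigenvalues $1,\mu$ with $0<|\mu|<1$, and $Q_1-Q_0=O(\epsilon)$. The environment seen from the walk, $\eta_t(x)=\xi_t(X_t+x)$, is a Markov chain on $\Omega$ with stochastic operator $(\mathcal T f)(\bar\eta)=\mathcal E[f(\eta_{t+1})\mid\eta_t=\bar\eta]$. $\Pi_0$ is the product of uniform measures on $\{\pm1\}$. For finite $\Gamma\subset\mathbb{Z}^d$ let $\Phi_\Gamma(\eta)=\prod_{x\in\Gamma}\eta(x)$, $\Phi_\emptyset=1$; each $f\in L^2(\Omega,\Pi_0)$ is written $f=\sum_\Gamma f_\Gamma\Phi_\Gamma$. For a fixed $M>1$, $\mathcal H_M=\{f:\|f\|_M:=\sum_\Gamma|f_\Gamma|M^{|\Gamma|}<\infty\}$. Standing assumptions (valid for $\epsilon,|\mu|$ small): $\mathcal T$ maps $\mathcal H_M$ into itself; the chain $(\eta_t)$ has an invariant probability measure $\Pi$, absolutely continuous w.r.t. $\Pi_0$ with bounded density; there is $\bar\mu\in(0,1)$ with $\|\mathcal T f\|_M\le\bar\mu\|f\|_M$ for all $f\in\widehat{\mathcal H}_M:=\{f\in\mathcal H_M:\int f\,d\Pi=0\}$. The dynamics and $\Pi$ are invariant under the global spin flip $\eta\mapsto-\eta$. Path space notation: $\widehat\Omega=\{\pm1\}^{\mathbb{Z}^d\times\mathbb{Z}_+}$; $\mathcal P_\Pi$ is the law of $(\eta_t)_{t\ge0}$ with $\eta_0\sim\Pi$; $\mathfrak M_{t_0}^{t_1}$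 is the $\sigma$-algebra generated by $\eta_{t_0},\dots,\eta_{t_1}$, $\mathfrak M_t=\mathfrak M_t^t$. For a bounded measurable function $F$ on $\widehat\Omega$, $G^{(F)}(\eta):=\mathcal E[F\mid\mathfrak M_0]$ viewed as a function of $\eta_0=\eta\in\Omega$ (the expectation of $F$ for the chain started at $\eta$). $\zeta_t:=\eta_t(0)$, $\widehat\zeta=(\zeta_t)_{t\ge0}\in\Omega_+:=\{\pm1\}^{\mathbb{Z}_+}$; a function $f$ on $\Omega_+$ is identified with the function $f(\widehat\zeta)$ on $\widehat\Omega$. Walsh functions: $\Psi_\gamma(\widehat\zeta)=\prod_{t\in\gamma}\zeta_t$ for finite $\gamma\subset\mathbb{Z}_+$, $\Psi_\emptyset=1$. $\mu_*:=M\sqrt{\bar\mu(1+2\bar\mu)}$. *)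

theory Defs
  imports "HOL-Probability.Probability"
begin

text \<open>Sites of the lattice Z^d are vectors of type int^'d; a configuration
  (an element of Omega) is a function from sites to the spin values -1, +1 (as reals).\<close>

definition dotZ :: "real^'d \<Rightarrow> int^'d \<Rightarrow> real" where
  "dotZ lam u = (\<Sum>i\<in>UNIV. lam $ i * real_of_int (u $ i))"

definition ptilde :: "(int^'d \<Rightarrow> real) \<Rightarrow> real^'d \<Rightarrow> complex" where
  "ptilde P0 lam = (\<Sum>u\<in>{u. P0 u \<noteq> 0}. complex_of_real (P0 u) * cis (dotZ lam u))"

definition fourier_coeff :: "(real^'d \<Rightarrow> complex) \<Rightarrow> int^'d \<Rightarrow> complex" where
  "fourier_coeff h k = complex_of_real (1 / (2 * pi) ^ CARD('d)) *
     (LINT lam : cbox (- (\<chi> i. pi)) (\<chi> i. pi) | lborel. cis (- dotZ lam k) * h lam)"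

text \<open>Symmetric stochastic 2x2 matrix indexed by the spins -1, +1.\<close>
definition sym_stoch :: "(real \<Rightarrow> real \<Rightarrow> real) \<Rightarrow> bool" where
  "sym_stoch Q \<longleftrightarrow> (\<forall>s\<in>{-1,1}. \<forall>s'\<in>{-1,1}. 0 \<le> Q s s' \<and> Q s s' = Q s' s)
                    \<and> (\<forall>s\<in>{-1,1}. Q s 1 + Q s (-1) = 1)"

text \<open>Non-trivial eigenvalue of a symmetric stochastic 2x2 matrix (the other one is 1).\<close>
definition second_eig :: "(real \<Rightarrow> real \<Rightarrow> real) \<Rightarrow> real" where
  "second_eig Q = Q 1 1 - Q 1 (-1)"

definition spin_meas :: "(real \<Rightarrow> real \<Rightarrow> real) \<Rightarrow> real \<Rightarrow> real measure" where
  "spin_meas Q s = point_measure {-1, 1} (\<lambda>s'. ennreal (Q s s'))"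

definition Pi0 :: "(int^'d \<Rightarrow> real) measure" where
  "Pi0 = PiM UNIV (\<lambda>_. point_measure {-1, 1} (\<lambda>_. ennreal (1/2)))"

text \<open>Law of the next environment xi_{t+1} given xi_t = eta with the walker at 0.\<close>
definition xi_meas :: "(real \<Rightarrow> real \<Rightarrow> real) \<Rightarrow> (real \<Rightarrow> real \<Rightarrow> real)
    \<Rightarrow> (int^'d \<Rightarrow> real) \<Rightarrow> (int^'d \<Rightarrow> real) measure" where
  "xi_meas Q0 Q1 eta = PiM UNIV (\<lambda>y. spin_meas (if y = 0 then Q1 else Q0) (eta y))"

text \<open>Stochastic operator of the environment seen from the walk:
  (T f)(eta) = E[f(eta_{t+1}) | eta_t = eta], where the walker jumps by u with probability
  P0 u + eps c u eta(0), independently the environment is updated, and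
  eta_{t+1}(x) = xi_{t+1}(u + x).\<close>
definition Top :: "(int^'d \<Rightarrow> real) \<Rightarrow> (int^'d \<Rightarrow> real) \<Rightarrow> real
    \<Rightarrow> (real \<Rightarrow> real \<Rightarrow> real) \<Rightarrow> (real \<Rightarrow> real \<Rightarrow> real)
    \<Rightarrow> ((int^'d \<Rightarrow> real) \<Rightarrow> real) \<Rightarrow> (int^'d \<Rightarrow> real) \<Rightarrow> real" where
  "Top P0 c eps Q0 Q1 f eta =
     (\<Sum>u\<in>{u. P0 u \<noteq> 0 \<or> c u \<noteq> 0}. (P0 u + eps * c u * eta 0) *
        (\<integral>xi. f (\<lambda>x. xi (u + x)) \<partial>xi_meas Q0 Q1 eta))"

text \<open>Expectation E_eta[F(eta_0,...,eta_n)] of a function of the path (depending only on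
  the first n+1 coordinates) for the Markov chain with stochastic operator T started at eta.\<close>
primrec pathE :: "(('w \<Rightarrow> real) \<Rightarrow> 'w \<Rightarrow> real) \<Rightarrow> nat \<Rightarrow> ((nat \<Rightarrow> 'w) \<Rightarrow> real) \<Rightarrow> 'w \<Rightarrow> real" where
  "pathE T 0 F eta = F (\<lambda>_. eta)"
| "pathE T (Suc n) F eta = T (\<lambda>eta'. pathE T n (\<lambda>w. F (case_nat eta w)) eta') eta"

definition Phi :: "(int^'d) set \<Rightarrow> (int^'d \<Rightarrow> real) \<Rightarrow> real" where
  "Phi Gam eta = (\<Prod>x\<in>Gam. eta x)"

definition wcoeff :: "((int^'d \<Rightarrow> real) \<Rightarrow> real) \<Rightarrow> (int^'d) set \<Rightarrow> real" where
  "wcoeff f Gam = (\<integral>eta. f eta * Phi Gam eta \<partial>Pi0)"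

definition in_HM :: "real \<Rightarrow> ((int^'d \<Rightarrow> real) \<Rightarrow> real) \<Rightarrow> bool" where
  "in_HM M f \<longleftrightarrow> f \<in> borel_measurable Pi0 \<and> integrable Pi0 (\<lambda>eta. (f eta)\<^sup>2) \<and>
      (\<lambda>Gam. \<bar>wcoeff f Gam\<bar> * M ^ card Gam) summable_on {Gam. finite Gam}"

definition normM :: "real \<Rightarrow> ((int^'d \<Rightarrow> real) \<Rightarrow> real) \<Rightarrow> real" where
  "normM M f = (\<Sum>\<^sub>\<infinity>Gam\<in>{Gam. finite Gam}. \<bar>wcoeff f Gam\<bar> * M ^ card Gam)"

text \<open>G^{(f)} for f = sum over gamma subset {0..m-1} of fc gamma Psi_gamma, a function of
  zeta_t = eta_t(0), t < m.\<close>
definition Gf :: "(((int^'d \<Rightarrow> real) \<Rightarrow> real) \<Rightarrow> (int^'d \<Rightarrow> real) \<Rightarrow> real)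
    \<Rightarrow> nat \<Rightarrow> (nat set \<Rightarrow> real) \<Rightarrow> (int^'d \<Rightarrow> real) \<Rightarrow> real" where
  "Gf T m fc = pathE T (m - 1) (\<lambda>w. \<Sum>\<gamma>\<in>Pow {..<m}. fc \<gamma> * (\<Prod>t\<in>\<gamma>. w t 0))"

end

theory Submission
  imports Defs
begin


definition Om :: "(int^'d \<Rightarrow> real) set" where
  "Om = {eta. \<forall>x. eta x \<in> {-1, 1}}"

lemma space_Pi0: "space Pi0 = Om"
  by (auto simp: Pi0_def space_PiM Om_def space_point_measure PiE_def Pi_def extensional_def)

lemma space_xi: "space (xi_meas Q0 Q1 eta) = Om"
  by (auto simp: xi_meas_def spin_meas_def space_PiM Om_def space_point_measure PiE_def Pi_def extensional_def)

lemma sets_xi: "sets (xi_meas Q0 Q1 eta) = sets Pi0"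
  unfolding xi_meas_def Pi0_def spin_meas_def
  by (rule sets_PiM_cong) (auto simp: sets_point_measure)

lemma prob_half: "prob_space (point_measure {-1, 1::real} (\<lambda>_. ennreal (1/2)))"
  apply (rule prob_spaceI)
  apply (simp add: space_point_measure emeasure_point_measure_finite del: ennreal_half)
  by (metis divide_ennreal_def divide_self_if ennreal_divide_numeral
    ennreal_eq_1 ennreal_half ennreal_numeral zero_le_numeral zero_neq_numeral)

lemma pps_Pi0: "product_prob_space (\<lambda>_::int^'d. point_measure {-1, 1::real} (\<lambda>_. ennreal (1/2)))"
  by (rule product_prob_spaceI) (rule prob_half)

lemma prob_Pi0: "prob_space (Pi0 :: (int^'d \<Rightarrow> real) measure)"
proof -
  interpret product_prob_space "\<lambda>_::int^'d. point_measure {-1, 1::real} (\<lambda>_. ennreal (1/2))" UNIV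
    by (rule pps_Pi0)
  show ?thesis unfolding Pi0_def by (rule P.prob_space_axioms)
qed

lemma sym_stoch_facts:
  assumes "sym_stoch Q"
  shows "Q (-1) 1 = Q 1 (-1)" "Q 1 1 + Q 1 (-1) = 1" "Q (-1) 1 + Q (-1) (-1) = 1"
    "0 \<le> Q 1 1" "0 \<le> Q 1 (-1)" "0 \<le> Q (-1) 1" "0 \<le> Q (-1) (-1)"
proof -
  have h1: "\<forall>s\<in>{-1,1}. \<forall>s'\<in>{-1,1}. 0 \<le> Q s s' \<and> Q s s' = Q s' s"
    and h2: "\<forall>s\<in>{-1,1}. Q s 1 + Q s (-1) = 1" using assms unfolding sym_stoch_def by blast+
  show "Q (-1) 1 = Q 1 (-1)" using h1 by blast
  show "Q 1 1 + Q 1 (-1) = 1" using h2 by blast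
  show "Q (-1) 1 + Q (-1) (-1) = 1" using h2 by blast
  show "0 \<le> Q 1 1" "0 \<le> Q 1 (-1)" "0 \<le> Q (-1) 1" "0 \<le> Q (-1) (-1)" using h1 by blast+
qed

lemma prob_spin:
  assumes "sym_stoch Q" "s \<in> {-1, 1}"
  shows "prob_space (spin_meas Q s)"
proof -
  have "Q s 1 + Q s (-1) = 1" "Q s 1 \<ge> 0" "Q s (-1) \<ge> 0" using assms sym_stoch_facts[OF assms(1)] by auto
  then show ?thesis
    apply (intro prob_spaceI)
    apply (simp add: spin_meas_def space_point_measure emeasure_point_measure_finite)
    by (simp flip: ennreal_plus add: add.commute)
qed

lemma spin_int:
  assumes "sym_stoch Q" "s \<in> {-1, 1}"
  shows "(\<integral>z. z \<partial>spin_meas Q s) = second_eig Q * s"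
proof -
  have h: "Q s 1 \<ge> 0" "Q s (-1) \<ge> 0" using assms sym_stoch_facts[OF assms(1)] by auto
  have "(\<integral>z. z \<partial>spin_meas Q s) = Q s 1 - Q s (-1)"
    unfolding spin_meas_def
    apply (subst lebesgue_integral_point_measure_finite)
    using assms h by auto
  also have "\<dots> = second_eig Q * s"
  proof (cases "s = 1")
    case True then show ?thesis by (simp add: second_eig_def)
  next
    case False
    then have s: "s = -1" using assms(2) by auto
    have "Q (-1) 1 = Q 1 (-1)" "Q (-1) 1 + Q (-1) (-1) = 1" "Q 1 1 + Q 1 (-1) = 1"
      using sym_stoch_facts[OF assms(1)] by auto
    then show ?thesis by (simp add: s second_eig_def)
  qed
  finally show ?thesis .
qed

lemma pps_xi:
  assumes "sym_stoch Q0" "sym_stoch Q1" "eta \<in> Om"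
  shows "product_prob_space (\<lambda>y. spin_meas (if y = 0 then Q1 else Q0) (eta y))"
  apply (rule product_prob_spaceI)
  using assms by (auto simp: Om_def intro!: prob_spin)

lemma prob_xi:
  assumes "sym_stoch Q0" "sym_stoch Q1" "eta \<in> Om"
  shows "prob_space (xi_meas Q0 Q1 eta)"
proof -
  interpret product_prob_space "\<lambda>y. spin_meas (if y = 0 then Q1 else Q0) (eta y)" UNIV
    by (rule pps_xi[OF assms])
  show ?thesis unfolding xi_meas_def by (rule P.prob_space_axioms)
qed

lemma prod_int_PiM:
  fixes f :: "'i \<Rightarrow> 'a \<Rightarrow> real"
  assumes "product_prob_space M" "finite J"
    and "\<And>j. j \<in> J \<Longrightarrow> integrable (M j) (f j)"
  shows "(\<integral>x. (\<Prod>j\<in>J. f j (x j)) \<partial>PiM UNIV M) = (\<Prod>j\<in>J. integral\<^sup>L (M j) (f j))"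
proof -
  interpret product_prob_space M UNIV by fact
  have d: "distr (PiM UNIV M) (PiM J M) (\<lambda>x. restrict x J) = PiM J M"
    by (rule distr_PiM_restrict_finite) (use assms in auto)
  have m: "(\<lambda>x. \<Prod>j\<in>J. f j (x j)) \<in> borel_measurable (PiM J M)"
    using assms(3) by measurable
  have r: "(\<lambda>x. restrict x J) \<in> measurable (PiM UNIV M) (PiM J M)"
    by (rule measurable_restrict_subset) auto
  have "(\<integral>x. (\<Prod>j\<in>J. f j (x j)) \<partial>PiM UNIV M) = (\<integral>x. (\<Prod>j\<in>J. f j (restrict x J j)) \<partial>PiM UNIV M)"
    by (intro Bochner_Integration.integral_cong refl prod.cong) auto
  also have "\<dots> = (\<integral>x. (\<Prod>j\<in>J. f j (x j)) \<partial>distr (PiM UNIV M) (PiM J M) (\<lambda>x. restrict x J))"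
    by (rule integral_distr[symmetric, OF r m])
  also have "\<dots> = (\<Prod>j\<in>J. integral\<^sup>L (M j) (f j))"
    unfolding d by (rule product_integral_prod) (use assms in auto)
  finally show ?thesis .
qed


lemma Om_iff: "eta \<in> Om \<longleftrightarrow> (\<forall>x. eta x = -1 \<or> eta x = 1)"
  by (auto simp: Om_def)

lemma Om_shift: "xi \<in> Om \<Longrightarrow> (\<lambda>x. xi (u + x)) \<in> Om"
  by (auto simp: Om_def)

lemma comp_meas: "(\<lambda>e. e x) \<in> borel_measurable (Pi0::(int^'d \<Rightarrow> real) measure)"
proof -
  have "(\<lambda>e. e x) \<in> measurable (Pi0::(int^'d \<Rightarrow> real) measure) (point_measure {-1, 1::real} (\<lambda>_. ennreal (1/2)))"
    unfolding Pi0_def by (rule measurable_component_singleton) simp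
  moreover have "(\<lambda>z::real. z) \<in> borel_measurable (point_measure {-1, 1::real} (\<lambda>_. ennreal (1/2)))" by simp
  ultimately show ?thesis by (rule measurable_compose)
qed

lemma Phi_eq: "Phi G = (\<lambda>e. \<Prod>x\<in>G. e x)"
  by (rule ext) (simp add: Phi_def)

lemma Phi_meas[measurable]: "Phi G \<in> borel_measurable Pi0"
  unfolding Phi_eq by (rule borel_measurable_prod) (rule comp_meas)

lemma xi_borel: assumes "f \<in> borel_measurable Pi0" shows "f \<in> borel_measurable (xi_meas Q0 Q1 eta)"
  by (subst measurable_cong_sets[OF sets_xi refl]) (rule assms)

lemma shift_meas: fixes u :: "int^'d" shows "(\<lambda>xi x. xi (u + x)) \<in> measurable (xi_meas Q0 Q1 eta) Pi0"
  unfolding Pi0_def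
proof (rule measurable_PiM_single')
  fix i :: "int^'d"
  have "(\<lambda>xi. xi (u + i)) \<in> measurable (xi_meas Q0 Q1 eta) (spin_meas (if u + i = 0 then Q1 else Q0) (eta (u + i)))"
    unfolding xi_meas_def by (rule measurable_component_singleton) simp
  then show "(\<lambda>xi. xi (u + i)) \<in> measurable (xi_meas Q0 Q1 eta) (point_measure {-1, 1::real} (\<lambda>_. ennreal (1/2)))"
  proof -
    have st: "sets (spin_meas (if u + i = 0 then Q1 else Q0) (eta (u + i))) = sets (point_measure {-1, 1::real} (\<lambda>_. ennreal (1/2)))"
      by (simp add: spin_meas_def sets_point_measure)
    have eq: "measurable (xi_meas Q0 Q1 eta) (spin_meas (if u + i = 0 then Q1 else Q0) (eta (u + i)))
       = measurable (xi_meas Q0 Q1 eta) (point_measure {-1, 1::real} (\<lambda>_. ennreal (1/2)))"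
      by (rule measurable_cong_sets[OF refl st])
    show ?thesis using \<open>(\<lambda>xi. xi (u + i)) \<in> _\<close> unfolding eq .
  qed
next
  show "(\<lambda>\<omega> i. \<omega> (u + i)) \<in> space (xi_meas Q0 Q1 eta) \<rightarrow> (\<Pi>\<^sub>E i\<in>UNIV. space (point_measure {-1, 1::real} (\<lambda>_. ennreal (1/2))))"
    by (auto simp: space_xi Om_def space_point_measure PiE_iff)
qed

lemma Phi_pm: "e \<in> Om \<Longrightarrow> Phi G e = -1 \<or> Phi G e = 1"
proof (cases "finite G")
  case True
  assume e: "e \<in> Om"
  show ?thesis unfolding Phi_def using True
  proof (induction G rule: finite_induct)
    case (insert x F)
    have "e x = -1 \<or> e x = 1" using e by (auto simp: Om_def)
    have p: "prod e (insert x F) = e x * prod e F" using insert.hyps by simp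
    show ?case unfolding p using insert.IH \<open>e x = -1 \<or> e x = 1\<close> by (elim disjE) simp_all
  qed simp
qed (simp add: Phi_def)

lemma Phi_abs: "e \<in> Om \<Longrightarrow> \<bar>Phi G e\<bar> = 1"
  using Phi_pm[of e G] by auto

lemma int_half: "(\<integral>z. z \<partial>point_measure {-1, 1::real} (\<lambda>_. ennreal (1/2))) = 0"
  by (subst lebesgue_integral_point_measure_finite) auto

lemma int_Phi:
  assumes "finite G"
  shows "(\<integral>e. Phi G e \<partial>Pi0) = (if G = {} then 1 else 0)"
proof -
  have "(\<integral>e. Phi G e \<partial>Pi0) = (\<Prod>j\<in>G. \<integral>z. z \<partial>point_measure {-1, 1::real} (\<lambda>_. ennreal (1/2)))"
    unfolding Phi_def Pi0_def
    by (rule prod_int_PiM[OF pps_Pi0 assms, of "\<lambda>_ z. z"]) (rule integrable_point_measure_finite, simp)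
  also have "\<dots> = (\<Prod>j\<in>G. 0)"
    by (simp only: int_half)
  also have "\<dots> = (if G = {} then 1 else 0)"
    using assms by (simp add: card_gt_0_iff)
  finally show ?thesis .
qed

lemma Phi_mult:
  assumes "e \<in> Om" "finite G" "finite H"
  shows "Phi G e * Phi H e = Phi ((G - H) \<union> (H - G)) e"
proof -
  have sq: "Phi (G \<inter> H) e * Phi (G \<inter> H) e = 1"
    using Phi_pm[OF assms(1), of "G \<inter> H"] by auto
  have g: "Phi G e = Phi (G - H) e * Phi (G \<inter> H) e"
  proof -
    have "Phi G e = Phi ((G - H) \<union> (G \<inter> H)) e" by (simp add: Un_Diff_Int)
    also have "\<dots> = Phi (G - H) e * Phi (G \<inter> H) e"
      unfolding Phi_def using assms by (intro prod.union_disjoint) auto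
    finally show ?thesis .
  qed
  have h: "Phi H e = Phi (H - G) e * Phi (G \<inter> H) e"
  proof -
    have "Phi H e = Phi ((H - G) \<union> (G \<inter> H)) e" by (rule arg_cong[where f="\<lambda>S. Phi S e"]) blast
    also have "\<dots> = Phi (H - G) e * Phi (G \<inter> H) e"
      unfolding Phi_def using assms by (intro prod.union_disjoint) auto
    finally show ?thesis .
  qed
  have u: "Phi ((G - H) \<union> (H - G)) e = Phi (G - H) e * Phi (H - G) e"
    unfolding Phi_def using assms by (intro prod.union_disjoint) auto
  show ?thesis unfolding g h u using sq by (simp add: algebra_simps)
qed

lemma int_Phi_Phi:
  assumes "finite G" "finite H"
  shows "(\<integral>e. Phi G e * Phi H e \<partial>Pi0) = (if G = H then 1 else 0)"
proof -
  have "(\<integral>e. Phi G e * Phi H e \<partial>Pi0) = (\<integral>e. Phi ((G - H) \<union> (H - G)) e \<partial>Pi0)"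
    by (rule Bochner_Integration.integral_cong) (auto simp: space_Pi0 Phi_mult assms)
  also have "\<dots> = (if G = H then 1 else 0)"
    using assms by (subst int_Phi) auto
  finally show ?thesis .
qed

definition lam :: "(real \<Rightarrow> real \<Rightarrow> real) \<Rightarrow> (real \<Rightarrow> real \<Rightarrow> real) \<Rightarrow> int^'d \<Rightarrow> real" where
  "lam Q0 Q1 y = second_eig (if y = 0 then Q1 else Q0)"

lemma xi_prod:
  assumes "sym_stoch Q0" "sym_stoch Q1" "eta \<in> Om" "finite J"
  shows "(\<integral>xi. (\<Prod>y\<in>J. xi y) \<partial>xi_meas Q0 Q1 eta) = (\<Prod>y\<in>J. lam Q0 Q1 y * eta y)"
proof -
  have "(\<integral>xi. (\<Prod>y\<in>J. xi y) \<partial>xi_meas Q0 Q1 eta) = (\<Prod>y\<in>J. \<integral>z. z \<partial>spin_meas (if y = 0 then Q1 else Q0) (eta y))"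
    unfolding xi_meas_def
    by (rule prod_int_PiM[OF pps_xi[OF assms(1-3)] assms(4), of "\<lambda>_ z. z"]) (simp add: integrable_point_measure_finite spin_meas_def)
  also have "\<dots> = (\<Prod>y\<in>J. lam Q0 Q1 y * eta y)"
  proof (rule prod.cong[OF refl])
    fix y
    have "eta y \<in> {-1, 1}" using assms(3) by (auto simp: Om_def)
    moreover have "sym_stoch (if y = 0 then Q1 else Q0)" using assms by simp
    ultimately show "(\<integral>z. z \<partial>spin_meas (if y = 0 then Q1 else Q0) (eta y)) = lam Q0 Q1 y * eta y"
      unfolding lam_def by (rule spin_int[rotated])
  qed
  finally show ?thesis .
qed




definition good :: "((int^'d \<Rightarrow> real) \<Rightarrow> real) \<Rightarrow> bool" where
  "good f \<longleftrightarrow> f \<in> borel_measurable Pi0 \<and> (\<exists>K. \<forall>e\<in>Om. \<bar>f e\<bar> \<le> K)"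

locale sett =
  fixes P0 c :: "int^'d \<Rightarrow> real" and eps :: real and Q0 Q1 :: "real \<Rightarrow> real \<Rightarrow> real"
  assumes P0_fin: "finite {u. P0 u \<noteq> 0}"
    and P0_sum: "(\<Sum>u\<in>{u. P0 u \<noteq> 0}. P0 u) = 1"
    and P0_even: "\<forall>u. P0 (- u) = P0 u"
    and c_odd: "\<forall>u. c (- u) = - c u"
    and c_fin: "finite {u. c u \<noteq> 0}"
    and Q0: "sym_stoch Q0" and Q1: "sym_stoch Q1"
begin

abbreviation "T \<equiv> Top P0 c eps Q0 Q1"

definition "U = {u. P0 u \<noteq> 0 \<or> c u \<noteq> 0}"

lemma U_fin: "finite U"
proof -
  have "U = {u. P0 u \<noteq> 0} \<union> {u. c u \<noteq> 0}" by (auto simp: U_def)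
  then show ?thesis using P0_fin c_fin by simp
qed

lemma U_neg: "- u \<in> U \<longleftrightarrow> u \<in> U"
  using P0_even c_odd by (auto simp: U_def)

lemma T_def': "T f eta = (\<Sum>u\<in>U. (P0 u + eps * c u * eta 0) *
        (\<integral>xi. f (\<lambda>x. xi (u + x)) \<partial>xi_meas Q0 Q1 eta))"
  unfolding Top_def U_def ..

lemma T_cong:
  assumes "\<forall>e\<in>Om. f e = g e"
  shows "T f eta = T g eta"
  unfolding T_def'
  by (intro sum.cong refl arg_cong2[where f="(*)"] Bochner_Integration.integral_cong)
     (use assms in \<open>auto simp: space_xi Om_shift\<close>)

lemma T_homog: "T (\<lambda>e. k * f e) eta = k * T f eta"
  unfolding T_def' by (simp add: sum_distrib_left algebra_simps)

lemma integrable_shift: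
  assumes "good f" "eta \<in> Om"
  shows "integrable (xi_meas Q0 Q1 eta) (\<lambda>xi. f (\<lambda>x. xi (u + x)))"
proof -
  interpret prob_space "xi_meas Q0 Q1 eta" by (rule prob_xi[OF Q0 Q1 assms(2)])
  obtain K where K: "\<forall>e\<in>Om. \<bar>f e\<bar> \<le> K" using assms(1) unfolding good_def by blast
  have m: "f \<in> borel_measurable Pi0" using assms(1) unfolding good_def by blast
  show ?thesis
  proof (rule integrable_const_bound[where B=K])
    show "AE xi in xi_meas Q0 Q1 eta. norm (f (\<lambda>x. xi (u + x))) \<le> K"
      by (rule AE_I2) (use K in \<open>auto simp: space_xi Om_shift\<close>)
    show "(\<lambda>xi. f (\<lambda>x. xi (u + x))) \<in> borel_measurable (xi_meas Q0 Q1 eta)"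
      by (rule measurable_compose[OF shift_meas m])
  qed
qed

lemma T_sum:
  assumes "finite I" "\<forall>i\<in>I. good (h i)" "eta \<in> Om"
  shows "T (\<lambda>e. \<Sum>i\<in>I. h i e) eta = (\<Sum>i\<in>I. T (h i) eta)"
proof -
  have "T (\<lambda>e. \<Sum>i\<in>I. h i e) eta = (\<Sum>u\<in>U. (P0 u + eps * c u * eta 0) *
        (\<Sum>i\<in>I. \<integral>xi. h i (\<lambda>x. xi (u + x)) \<partial>xi_meas Q0 Q1 eta))"
    unfolding T_def'
  proof (intro sum.cong refl)
    fix u assume "u \<in> U"
    have "(\<integral>xi. (\<Sum>i\<in>I. h i (\<lambda>x. xi (u + x))) \<partial>xi_meas Q0 Q1 eta) = (\<Sum>i\<in>I. \<integral>xi. h i (\<lambda>x. xi (u + x)) \<partial>xi_meas Q0 Q1 eta)"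
      by (rule Bochner_Integration.integral_sum, rule integrable_shift) (use assms in auto)
    then show "(P0 u + eps * c u * eta 0) * (\<integral>xi. (\<Sum>i\<in>I. h i (\<lambda>x. xi (u + x))) \<partial>xi_meas Q0 Q1 eta) =
      (P0 u + eps * c u * eta 0) * (\<Sum>i\<in>I. \<integral>xi. h i (\<lambda>x. xi (u + x)) \<partial>xi_meas Q0 Q1 eta)" by simp
  qed
  also have "\<dots> = (\<Sum>i\<in>I. T (h i) eta)"
    unfolding T_def' by (simp add: sum_distrib_left sum.swap[of _ U])
  finally show ?thesis .
qed

lemma good_scale: "good f \<Longrightarrow> good (\<lambda>e. k * f e)"
  unfolding good_def
proof (elim conjE exE, intro conjI)
  fix K assume "f \<in> borel_measurable Pi0" "\<forall>e\<in>Om. \<bar>f e\<bar> \<le> K"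
  then show "(\<lambda>e. k * f e) \<in> borel_measurable Pi0" by measurable
  show "\<exists>K. \<forall>e\<in>Om. \<bar>k * f e\<bar> \<le> K"
    using \<open>\<forall>e\<in>Om. \<bar>f e\<bar> \<le> K\<close> by (intro exI[of _ "\<bar>k\<bar> * K"]) (auto simp: abs_mult intro: mult_left_mono)
qed

lemma T_lin:
  assumes "finite I" "\<forall>i\<in>I. good (h i)" "eta \<in> Om"
  shows "T (\<lambda>e. \<Sum>i\<in>I. a i * h i e) eta = (\<Sum>i\<in>I. a i * T (h i) eta)"
proof -
  have "\<forall>i\<in>I. good (\<lambda>e. a i * h i e)" using assms(2) good_scale by blast
  from T_sum[OF assms(1) this assms(3)] show ?thesis by (simp add: T_homog)
qed

lemma T_prod:
  assumes "eta \<in> Om" "finite G" "inj_on v G"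
  shows "T (\<lambda>e. \<Prod>x\<in>G. e (v x)) eta =
    (\<Sum>u\<in>U. (P0 u + eps * c u * eta 0) * (\<Prod>x\<in>G. lam Q0 Q1 (u + v x) * eta (u + v x)))"
  unfolding T_def'
proof (intro sum.cong refl arg_cong2[where f="(*)"])
  fix u
  have inj: "inj_on (\<lambda>x. u + v x) G" using assms(3) by (auto simp: inj_on_def)
  have "(\<integral>xi. (\<Prod>x\<in>G. xi (u + v x)) \<partial>xi_meas Q0 Q1 eta) = (\<integral>xi. (\<Prod>y\<in>(\<lambda>x. u + v x) ` G. xi y) \<partial>xi_meas Q0 Q1 eta)"
    by (simp add: prod.reindex[OF inj])
  also have "\<dots> = (\<Prod>y\<in>(\<lambda>x. u + v x) ` G. lam Q0 Q1 y * eta y)"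
    by (rule xi_prod[OF Q0 Q1 assms(1)]) (use assms in simp)
  also have "\<dots> = (\<Prod>x\<in>G. lam Q0 Q1 (u + v x) * eta (u + v x))"
    by (simp add: prod.reindex[OF inj])
  finally show "(\<integral>xi. (\<Prod>x\<in>G. xi (u + v x)) \<partial>xi_meas Q0 Q1 eta) = (\<Prod>x\<in>G. lam Q0 Q1 (u + v x) * eta (u + v x))" .
qed

end


definition rep :: "(int^'d) set set \<Rightarrow> ((int^'d) set \<Rightarrow> real) \<Rightarrow> ((int^'d \<Rightarrow> real) \<Rightarrow> real) \<Rightarrow> bool" where
  "rep F a g \<longleftrightarrow> finite F \<and> (\<forall>G\<in>F. finite G) \<and> (\<forall>e\<in>Om. g e = (\<Sum>G\<in>F. a G * Phi G e))"

definition walsh :: "((int^'d \<Rightarrow> real) \<Rightarrow> real) \<Rightarrow> bool" where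
  "walsh g \<longleftrightarrow> (\<exists>F a. rep F a g)"

lemma rep_extend:
  assumes "rep F a g" "finite K" "F \<subseteq> K" "\<forall>G\<in>K. finite G"
  shows "rep K (\<lambda>G. if G \<in> F then a G else 0) g"
  unfolding rep_def
proof (intro conjI ballI)
  fix e :: "int^'a \<Rightarrow> real" assume "e \<in> Om"
  have "(\<Sum>G\<in>K. (if G \<in> F then a G else 0) * Phi G e) = (\<Sum>G\<in>K. if G \<in> F then a G * Phi G e else 0)"
    by (intro sum.cong) auto
  also have "\<dots> = (\<Sum>G\<in>K \<inter> F. a G * Phi G e)"
    by (rule sum.inter_restrict[symmetric]) fact
  also have "K \<inter> F = F" using assms(3) by blast
  finally show "g e = (\<Sum>G\<in>K. (if G \<in> F then a G else 0) * Phi G e)"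
    using assms(1) \<open>e \<in> Om\<close> unfolding rep_def by simp
qed (use assms in auto)

lemma walsh_cong: "walsh g \<Longrightarrow> (\<forall>e\<in>Om. h e = g e) \<Longrightarrow> walsh h"
  unfolding walsh_def rep_def by auto

lemma rep_Phi: "finite G \<Longrightarrow> rep {G} (\<lambda>_. 1) (Phi G)"
  unfolding rep_def by auto

lemma walsh_Phi: "finite G \<Longrightarrow> walsh (Phi G)"
  unfolding walsh_def using rep_Phi by blast

lemma rep_const: "rep {{}} (\<lambda>_. k) (\<lambda>_. k)"
  unfolding rep_def by (auto simp: Phi_def)

lemma walsh_const: "walsh (\<lambda>_. k)"
  unfolding walsh_def using rep_const by blast

lemma rep_add:
  assumes "rep F a f" "rep F' b g"
  shows "rep (F \<union> F') (\<lambda>G. (if G \<in> F then a G else 0) + (if G \<in> F' then b G else 0)) (\<lambda>e. f e + g e)"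
proof -
  have fin: "finite (F \<union> F')" "\<forall>G\<in>F \<union> F'. finite G" using assms unfolding rep_def by auto
  have r1: "rep (F \<union> F') (\<lambda>G. if G \<in> F then a G else 0) f" by (rule rep_extend[OF assms(1) fin(1) _ fin(2)]) auto
  have r2: "rep (F \<union> F') (\<lambda>G. if G \<in> F' then b G else 0) g" by (rule rep_extend[OF assms(2) fin(1) _ fin(2)]) auto
  show ?thesis using r1 r2 fin unfolding rep_def by (simp add: sum.distrib algebra_simps)
qed

lemma walsh_add: "walsh f \<Longrightarrow> walsh g \<Longrightarrow> walsh (\<lambda>e. f e + g e)"
  unfolding walsh_def using rep_add by blast

lemma rep_scale: "rep F a g \<Longrightarrow> rep F (\<lambda>G. k * a G) (\<lambda>e. k * g e)"
  unfolding rep_def by (simp add: sum_distrib_left algebra_simps)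

lemma walsh_scale: "walsh g \<Longrightarrow> walsh (\<lambda>e. k * g e)"
  unfolding walsh_def using rep_scale by blast

lemma walsh_sum: "finite I \<Longrightarrow> (\<forall>i\<in>I. walsh (h i)) \<Longrightarrow> walsh (\<lambda>e. \<Sum>i\<in>I. h i e)"
proof (induction I rule: finite_induct)
  case empty then show ?case using walsh_const[of 0] by simp
next
  case (insert x F)
  then show ?case using walsh_add[of "h x" "\<lambda>e. \<Sum>i\<in>F. h i e"] by simp
qed

lemma walsh_diff: "walsh f \<Longrightarrow> walsh g \<Longrightarrow> walsh (\<lambda>e. f e - g e)"
  using walsh_add[of f "\<lambda>e. (-1) * g e"] walsh_scale[of g "-1"] by simp

lemma walsh_eta0:
  assumes "walsh g" shows "walsh (\<lambda>e. e 0 * g e)"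
proof -
  obtain F a where r: "rep F a g" using assms unfolding walsh_def by blast
  have "walsh (\<lambda>e. \<Sum>G\<in>F. a G * Phi ((G - {0}) \<union> ({0} - G)) e)"
    using r unfolding rep_def by (intro walsh_sum ballI walsh_scale walsh_Phi) auto
  moreover have "\<forall>e\<in>Om. e 0 * g e = (\<Sum>G\<in>F. a G * Phi ((G - {0}) \<union> ({0} - G)) e)"
  proof
    fix e :: "int^'a \<Rightarrow> real" assume e: "e \<in> Om"
    have "e 0 * g e = (\<Sum>G\<in>F. a G * (Phi G e * Phi {0} e))"
      using r e unfolding rep_def by (simp add: sum_distrib_left Phi_def algebra_simps)
    also have "\<dots> = (\<Sum>G\<in>F. a G * Phi ((G - {0}) \<union> ({0} - G)) e)"
      using r e unfolding rep_def by (intro sum.cong refl) (simp add: Phi_mult)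
    finally show "e 0 * g e = (\<Sum>G\<in>F. a G * Phi ((G - {0}) \<union> ({0} - G)) e)" .
  qed
  ultimately show ?thesis by (rule walsh_cong)
qed

lemma walsh_good: assumes "walsh g" shows "good g"
proof -
  obtain F a where r: "rep F a g" using assms unfolding walsh_def by blast
  have "(\<lambda>e. \<Sum>G\<in>F. a G * Phi G e) \<in> borel_measurable Pi0" by measurable
  then have m: "g \<in> borel_measurable Pi0"
    by (rule measurable_cong[THEN iffD1, rotated]) (use r in \<open>auto simp: rep_def space_Pi0\<close>)
  have "\<forall>e\<in>Om. \<bar>g e\<bar> \<le> (\<Sum>G\<in>F. \<bar>a G\<bar>)"
  proof
    fix e :: "int^'a \<Rightarrow> real" assume e: "e \<in> Om"
    have "\<bar>g e\<bar> = \<bar>\<Sum>G\<in>F. a G * Phi G e\<bar>" using r e unfolding rep_def by simp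
    also have "\<dots> \<le> (\<Sum>G\<in>F. \<bar>a G * Phi G e\<bar>)" by (rule sum_abs)
    also have "\<dots> = (\<Sum>G\<in>F. \<bar>a G\<bar>)" using e by (simp add: abs_mult Phi_abs)
    finally show "\<bar>g e\<bar> \<le> (\<Sum>G\<in>F. \<bar>a G\<bar>)" .
  qed
  with m show ?thesis unfolding good_def by blast
qed

lemma walsh_prodv:
  assumes "finite G" "inj_on v G"
  shows "walsh (\<lambda>e. \<Prod>x\<in>G. e (v x))"
proof -
  have "walsh (Phi (v ` G))" using assms by (intro walsh_Phi) simp
  moreover have "\<forall>e\<in>Om. (\<Prod>x\<in>G. e (v x)) = Phi (v ` G) e"
    using assms by (simp add: Phi_def prod.reindex)
  ultimately show ?thesis by (rule walsh_cong)
qed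

context sett begin

lemma T_Phi:
  assumes "eta \<in> Om" "finite G"
  shows "T (Phi G) eta = (\<Sum>u\<in>U. (P0 u + eps * c u * eta 0) * (\<Prod>x\<in>G. lam Q0 Q1 (u + x) * eta (u + x)))"
  using T_prod[OF assms, of "\<lambda>x. x"] by (simp add: Phi_eq)

lemma walsh_T_Phi:
  assumes "finite G" shows "walsh (T (Phi G))"
proof -
  let ?W = "\<lambda>u e. \<Prod>x\<in>G. e (u + x)"
  let ?L = "\<lambda>u. \<Prod>x\<in>G. lam Q0 Q1 (u + x)"
  have w: "walsh (?W u)" for u using assms by (intro walsh_prodv) (auto simp: inj_on_def)
  have "walsh (\<lambda>e. \<Sum>u\<in>U. (P0 u * ?L u) * ?W u e + (eps * c u * ?L u) * (e 0 * ?W u e))"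
    using w U_fin by (intro walsh_sum ballI walsh_add walsh_scale walsh_eta0) auto
  moreover have "\<forall>e\<in>Om. T (Phi G) e = (\<Sum>u\<in>U. (P0 u * ?L u) * ?W u e + (eps * c u * ?L u) * (e 0 * ?W u e))"
    using assms by (simp add: T_Phi prod.distrib algebra_simps)
  ultimately show ?thesis by (rule walsh_cong)
qed

lemma T_rep:
  assumes "rep F a g" "eta \<in> Om"
  shows "T g eta = (\<Sum>G\<in>F. a G * T (Phi G) eta)"
proof -
  have "T g eta = T (\<lambda>e. \<Sum>G\<in>F. a G * Phi G e) eta"
    using assms(1) unfolding rep_def by (intro T_cong) auto
  also have "\<dots> = (\<Sum>G\<in>F. a G * T (Phi G) eta)"
    using assms unfolding rep_def by (intro T_lin) (auto intro: walsh_good walsh_Phi)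
  finally show ?thesis .
qed

lemma walsh_T: assumes "walsh g" shows "walsh (T g)"
proof -
  obtain F a where r: "rep F a g" using assms unfolding walsh_def by blast
  have "walsh (\<lambda>e. \<Sum>G\<in>F. a G * T (Phi G) e)"
    using r unfolding rep_def by (intro walsh_sum ballI walsh_scale walsh_T_Phi) auto
  moreover have "\<forall>e\<in>Om. T g e = (\<Sum>G\<in>F. a G * T (Phi G) e)"
    using T_rep[OF r] by blast
  ultimately show ?thesis by (rule walsh_cong)
qed

lemma T_one: assumes "eta \<in> Om" shows "T (\<lambda>_. 1) eta = 1"
proof -
  have "T (\<lambda>_. 1) eta = T (Phi {}) eta" by (simp add: Phi_eq)
  also have "\<dots> = (\<Sum>u\<in>U. P0 u) + eps * eta 0 * (\<Sum>u\<in>U. c u)"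
    using assms by (simp add: T_Phi sum.distrib sum_distrib_left algebra_simps)
  also have "(\<Sum>u\<in>U. P0 u) = 1"
  proof -
    have "(\<Sum>u\<in>U. P0 u) = (\<Sum>u\<in>{u. P0 u \<noteq> 0}. P0 u)"
      by (rule sum.mono_neutral_right[OF U_fin]) (auto simp: U_def)
    then show ?thesis using P0_sum by simp
  qed
  also have "(\<Sum>u\<in>U. c u) = 0"
  proof -
    have "(\<Sum>u\<in>U. c u) = (\<Sum>u\<in>U. c (- u))"
      by (rule sum.reindex_bij_witness[of _ uminus uminus]) (auto simp: U_neg)
    then show ?thesis using c_odd by (simp add: sum_negf)
  qed
  finally show ?thesis by simp
qed

lemma T_const: assumes "eta \<in> Om" shows "T (\<lambda>_. k) eta = k"
  using T_homog[of k "\<lambda>_. 1" eta] T_one[OF assms] by simp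

end


lemma integrable_Pi0_bound:
  fixes f :: "(int^'d \<Rightarrow> real) \<Rightarrow> real" and K :: real
  assumes "f \<in> borel_measurable Pi0" "\<forall>e\<in>Om. \<bar>f e\<bar> \<le> K"
  shows "integrable Pi0 f"
proof -
  interpret prob_space Pi0 by (rule prob_Pi0)
  show ?thesis
    by (rule integrable_const_bound[where B=K]) (use assms in \<open>auto simp: space_Pi0 intro!: AE_I2\<close>)
qed

lemma wcoeff_rep:
  assumes r: "rep F a g" and H: "finite H"
  shows "wcoeff g H = (if H \<in> F then a H else 0)"
proof -
  have fin: "finite F" "\<forall>G\<in>F. finite G" using r unfolding rep_def by auto
  have "wcoeff g H = (\<integral>e. (\<Sum>G\<in>F. a G * (Phi G e * Phi H e)) \<partial>Pi0)"
    unfolding wcoeff_def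
    by (rule Bochner_Integration.integral_cong) (use r in \<open>auto simp: rep_def space_Pi0 sum_distrib_right mult.assoc\<close>)
  also have "\<dots> = (\<Sum>G\<in>F. a G * (\<integral>e. Phi G e * Phi H e \<partial>Pi0))"
  proof (subst Bochner_Integration.integral_sum)
    fix G assume "G \<in> F"
    show "integrable Pi0 (\<lambda>e. a G * (Phi G e * Phi H e))"
      by (rule integrable_Pi0_bound[where K="\<bar>a G\<bar>"]) (auto simp: abs_mult Phi_abs)
  qed simp
  also have "\<dots> = (\<Sum>G\<in>F. a G * (if G = H then 1 else 0))"
    using fin H by (intro sum.cong refl) (simp add: int_Phi_Phi)
  also have "\<dots> = (if H \<in> F then a H else 0)"
    using fin by (simp add: sum.delta' if_distrib cong: if_cong)
  finally show ?thesis .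
qed

lemma normM_rep:
  assumes r: "rep F a g"
  shows "normM M g = (\<Sum>G\<in>F. \<bar>a G\<bar> * M ^ card G)"
proof -
  have fin: "finite F" "\<forall>G\<in>F. finite G" using r unfolding rep_def by auto
  have "normM M g = infsum (\<lambda>G. \<bar>wcoeff g G\<bar> * M ^ card G) F"
    unfolding normM_def
    by (rule infsum_cong_neutral) (use fin in \<open>auto simp: wcoeff_rep[OF r]\<close>)
  also have "\<dots> = (\<Sum>G\<in>F. \<bar>wcoeff g G\<bar> * M ^ card G)" using fin by (simp add: infsum_finite)
  also have "\<dots> = (\<Sum>G\<in>F. \<bar>a G\<bar> * M ^ card G)"
    using fin by (intro sum.cong refl) (simp add: wcoeff_rep[OF r])
  finally show ?thesis .
qed

lemma in_HM_walsh:
  assumes "walsh g" shows "in_HM M g"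
proof -
  obtain F a where r: "rep F a g" using assms unfolding walsh_def by blast
  have fin: "finite F" "\<forall>G\<in>F. finite G" using r unfolding rep_def by auto
  obtain K where m: "g \<in> borel_measurable Pi0" and K: "\<forall>e\<in>Om. \<bar>g e\<bar> \<le> K"
    using walsh_good[OF assms] unfolding good_def by blast
  have "integrable Pi0 (\<lambda>e. (g e)\<^sup>2)"
  proof (rule integrable_Pi0_bound[where K="K\<^sup>2"])
    show "(\<lambda>e. (g e)\<^sup>2) \<in> borel_measurable Pi0" using m by measurable
    show "\<forall>e\<in>Om. \<bar>(g e)\<^sup>2\<bar> \<le> K\<^sup>2"
      using K by (auto simp: abs_le_square_iff[symmetric] intro: order_trans[OF _ abs_ge_self])
  qed
  moreover have "(\<lambda>G. \<bar>wcoeff g G\<bar> * M ^ card G) summable_on {G. finite G}"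
  proof (rule finite_nonzero_values_imp_summable_on)
    show "finite {G \<in> {G. finite G}. \<bar>wcoeff g G\<bar> * M ^ card G \<noteq> 0}"
      by (rule finite_subset[OF _ fin(1)]) (auto simp: wcoeff_rep[OF r] split: if_splits)
  qed
  ultimately show ?thesis using m unfolding in_HM_def by blast
qed

lemma rep_walsh: "rep F a g \<Longrightarrow> walsh g"
  unfolding walsh_def by blast

lemma norm_nonneg: assumes "walsh g" "M \<ge> 0" shows "normM M g \<ge> 0"
proof -
  obtain F a where r: "rep F a g" using assms unfolding walsh_def by blast
  show ?thesis using assms(2) by (simp add: normM_rep[OF r] sum_nonneg)
qed

lemma norm_add:
  assumes "walsh f" "walsh g" "M \<ge> 0"
  shows "normM M (\<lambda>e. f e + g e) \<le> normM M f + normM M g"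
proof -
  obtain F a where r1: "rep F a f" using assms unfolding walsh_def by blast
  obtain F' b where r2: "rep F' b g" using assms unfolding walsh_def by blast
  have fin: "finite (F \<union> F')" "\<forall>G\<in>F \<union> F'. finite G" using r1 r2 unfolding rep_def by auto
  define a' where "a' = (\<lambda>G. if G \<in> F then a G else 0)"
  define b' where "b' = (\<lambda>G. if G \<in> F' then b G else 0)"
  have r1': "rep (F \<union> F') a' f" unfolding a'_def by (rule rep_extend[OF r1 fin(1) _ fin(2)]) auto
  have r2': "rep (F \<union> F') b' g" unfolding b'_def by (rule rep_extend[OF r2 fin(1) _ fin(2)]) auto
  have r3: "rep (F \<union> F') (\<lambda>G. a' G + b' G) (\<lambda>e. f e + g e)"
    using r1' r2' fin unfolding rep_def by (simp add: sum.distrib algebra_simps)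
  have "normM M (\<lambda>e. f e + g e) = (\<Sum>G\<in>F \<union> F'. \<bar>a' G + b' G\<bar> * M ^ card G)" by (rule normM_rep[OF r3])
  also have "\<dots> \<le> (\<Sum>G\<in>F \<union> F'. \<bar>a' G\<bar> * M ^ card G + \<bar>b' G\<bar> * M ^ card G)"
    by (intro sum_mono) (simp add: distrib_right[symmetric] mult_right_mono abs_triangle_ineq assms(3))
  also have "\<dots> = normM M f + normM M g"
    by (simp add: sum.distrib normM_rep[OF r1'] normM_rep[OF r2'])
  finally show ?thesis .
qed

lemma norm_scale:
  assumes "walsh g" shows "normM M (\<lambda>e. k * g e) = \<bar>k\<bar> * normM M g"
proof -
  obtain F a where r: "rep F a g" using assms unfolding walsh_def by blast
  show ?thesis
    by (simp add: normM_rep[OF r] normM_rep[OF rep_scale[OF r]] sum_distrib_left abs_mult algebra_simps)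
qed

lemma norm_const: "normM M (\<lambda>_. k) = \<bar>k\<bar>"
  by (simp add: normM_rep[OF rep_const])

lemma norm_diff:
  assumes "walsh f" "walsh g" "M \<ge> 0"
  shows "normM M (\<lambda>e. f e - g e) \<le> normM M f + normM M g"
proof -
  have w: "walsh (\<lambda>e. (-1) * g e)" by (rule walsh_scale[OF assms(2)])
  have "normM M (\<lambda>e. f e + (-1) * g e) \<le> normM M f + normM M (\<lambda>e. (-1) * g e)"
    by (rule norm_add[OF assms(1) w assms(3)])
  moreover have "normM M (\<lambda>e. - g e) = normM M g" using norm_scale[OF assms(2), of M "-1"] by simp
  ultimately show ?thesis by simp
qed

lemma card_sd: "finite G \<Longrightarrow> card ((G - {0}) \<union> ({0} - G)) \<le> Suc (card G)"
proof -
  assume fG: "finite G"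
  have "card ((G - {0}) \<union> ({0} - G)) \<le> card (G - {0}) + card ({0} - G)" by (rule card_Un_le)
  also have "\<dots> \<le> card G + 1"
  proof (rule add_mono)
    show "card (G - {0}) \<le> card G" using fG by (intro card_mono) auto
    show "card ({0} - G) \<le> 1" by (rule order_trans[OF card_mono[of "{0}"]]) auto
  qed
  finally show ?thesis by simp
qed

lemma norm_eta0:
  assumes "walsh g" "M \<ge> 1"
  shows "normM M (\<lambda>e. e 0 * g e) \<le> M * normM M g"
proof -
  obtain F a where r: "rep F a g" using assms unfolding walsh_def by blast
  have fin: "finite F" "\<forall>G\<in>F. finite G" using r unfolding rep_def by auto
  define sd where "sd = (\<lambda>G::(int^'a) set. (G - {0}) \<union> ({0} - G))"
  have sdsd: "sd (sd G) = G" for G unfolding sd_def by blast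
  have inj: "inj_on sd X" for X by (metis inj_on_inverseI sdsd)
  have r2: "rep (sd ` F) (\<lambda>H. a (sd H)) (\<lambda>e. e 0 * g e)"
    unfolding rep_def
  proof (intro conjI ballI)
    show "finite (sd ` F)" using fin by simp
    show "finite H" if "H \<in> sd ` F" for H using that fin by (auto simp: sd_def)
    fix e :: "int^'a \<Rightarrow> real" assume e: "e \<in> Om"
    have "e 0 * g e = (\<Sum>G\<in>F. a G * (Phi G e * Phi {0} e))"
      using r e unfolding rep_def by (simp add: sum_distrib_left Phi_def algebra_simps)
    also have "\<dots> = (\<Sum>G\<in>F. a (sd (sd G)) * Phi (sd G) e)"
      using fin e unfolding sdsd by (intro sum.cong refl) (simp add: Phi_mult sd_def)
    also have "\<dots> = (\<Sum>H\<in>sd ` F. a (sd H) * Phi H e)"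
      by (simp add: sum.reindex[OF inj])
    finally show "e 0 * g e = (\<Sum>H\<in>sd ` F. a (sd H) * Phi H e)" .
  qed
  have "normM M (\<lambda>e. e 0 * g e) = (\<Sum>H\<in>sd ` F. \<bar>a (sd H)\<bar> * M ^ card H)" by (rule normM_rep[OF r2])
  also have "\<dots> = (\<Sum>G\<in>F. \<bar>a G\<bar> * M ^ card (sd G))" by (simp add: sum.reindex[OF inj] sdsd)
  also have "\<dots> \<le> (\<Sum>G\<in>F. \<bar>a G\<bar> * (M * M ^ card G))"
  proof (intro sum_mono mult_left_mono)
    fix G assume "G \<in> F"
    then have "card (sd G) \<le> Suc (card G)" using fin card_sd unfolding sd_def by blast
    then have "M ^ card (sd G) \<le> M ^ Suc (card G)" using power_increasing assms(2) by blast
    then show "M ^ card (sd G) \<le> M * M ^ card G" by simp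
  qed simp
  also have "\<dots> = M * normM M g" by (simp add: normM_rep[OF r] sum_distrib_left algebra_simps)
  finally show ?thesis .
qed

lemma walsh_bound:
  fixes g :: "(int^'d \<Rightarrow> real) \<Rightarrow> real"
  assumes "walsh g" "M \<ge> 1" "e \<in> Om"
  shows "\<bar>g e\<bar> \<le> normM M g"
proof -
  obtain F a where r: "rep F a g" using assms unfolding walsh_def by blast
  have "\<bar>g e\<bar> = \<bar>\<Sum>G\<in>F. a G * Phi G e\<bar>" using r assms(3) unfolding rep_def by simp
  also have "\<dots> \<le> (\<Sum>G\<in>F. \<bar>a G * Phi G e\<bar>)" by (rule sum_abs)
  also have "\<dots> \<le> (\<Sum>G\<in>F. \<bar>a G\<bar> * M ^ card G)"
  proof (intro sum_mono)
    fix G :: "(int^'d) set"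
    have "1 \<le> M ^ card G" using assms(2) by simp
    then have "\<bar>a G\<bar> * 1 \<le> \<bar>a G\<bar> * M ^ card G" by (rule mult_left_mono) simp
    then show "\<bar>a G * Phi G e\<bar> \<le> \<bar>a G\<bar> * M ^ card G"
      using assms(3) by (simp add: abs_mult Phi_abs)
  qed
  also have "\<dots> = normM M g" by (simp add: normM_rep[OF r])
  finally show ?thesis .
qed




definition Sm :: "(int^'d \<Rightarrow> real) \<Rightarrow> (int^'d \<Rightarrow> real)" where
  "Sm e = (\<lambda>x. - e (- x))"

lemma Sm_Om: "e \<in> Om \<Longrightarrow> Sm e \<in> Om"
  by (auto simp: Om_def Sm_def)

lemma Phi_Sm: "finite G \<Longrightarrow> Phi G (Sm e) = (-1) ^ card G * (\<Prod>x\<in>G. e (- x))"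
  by (simp add: Phi_def Sm_def prod_uminus)

lemma walsh_S: assumes "walsh g" shows "walsh (\<lambda>e. g (Sm e))"
proof -
  obtain F a where r: "rep F a g" using assms unfolding walsh_def by blast
  have "walsh (\<lambda>e. \<Sum>G\<in>F. (a G * (-1) ^ card G) * (\<Prod>x\<in>G. e (- x)))"
    using r unfolding rep_def by (intro walsh_sum ballI walsh_scale walsh_prodv) (auto simp: inj_on_def)
  moreover have "\<forall>e\<in>Om. g (Sm e) = (\<Sum>G\<in>F. (a G * (-1) ^ card G) * (\<Prod>x\<in>G. e (- x)))"
    using r unfolding rep_def by (auto simp: Sm_Om Phi_Sm intro!: sum.cong)
  ultimately show ?thesis by (rule walsh_cong)
qed

lemma lam_neg: "lam Q0 Q1 (- y) = lam Q0 Q1 y"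
  by (simp add: lam_def)

context sett begin

lemma T_add:
  assumes "good f" "good g" "eta \<in> Om"
  shows "T (\<lambda>e. f e + g e) eta = T f eta + T g eta"
  using T_sum[of "UNIV::bool set" "\<lambda>b. if b then f else g" eta] assms by (simp add: UNIV_bool ac_simps)

lemma T_Phi_S:
  assumes "eta \<in> Om" "finite G"
  shows "T (Phi G) (Sm eta) = (-1) ^ card G * T (\<lambda>e. \<Prod>x\<in>G. e (- x)) eta"
proof -
  have "T (Phi G) (Sm eta) = (\<Sum>u\<in>U. (P0 u - eps * c u * eta 0) * (\<Prod>x\<in>G. lam Q0 Q1 (u + x) * - eta (- (u + x))))"
    using T_Phi[OF Sm_Om[OF assms(1)] assms(2)] by (simp add: Sm_def)
  also have "\<dots> = (\<Sum>u\<in>U. (P0 (- u) - eps * c (- u) * eta 0) * (\<Prod>x\<in>G. lam Q0 Q1 (- u + x) * - eta (- (- u + x))))"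
    by (rule sum.reindex_bij_witness[of _ uminus uminus]) (auto simp: U_neg)
  also have "\<dots> = (\<Sum>u\<in>U. (P0 u + eps * c u * eta 0) * ((-1) ^ card G * (\<Prod>x\<in>G. lam Q0 Q1 (u + - x) * eta (u + - x))))"
  proof (intro sum.cong refl)
    fix u :: "int^'d"
    have l: "lam Q0 Q1 (- u + x) = lam Q0 Q1 (u + - x)" for x :: "int^'d"
      using lam_neg[of Q0 Q1 "u + - x"] by (simp add: algebra_simps)
    have l2: "lam Q0 Q1 (x - u) = lam Q0 Q1 (u - x)" for x :: "int^'d"
      using lam_neg[of Q0 Q1 "u - x"] by simp
    have "(\<Prod>x\<in>G. lam Q0 Q1 (- u + x) * - eta (- (- u + x))) = (\<Prod>x\<in>G. (-1) * (lam Q0 Q1 (u + - x) * eta (u + - x)))"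
      by (intro prod.cong refl) (simp add: l l2 algebra_simps)
    also have "\<dots> = (-1) ^ card G * (\<Prod>x\<in>G. lam Q0 Q1 (u + - x) * eta (u + - x))"
      by (simp add: prod_uminus prod.distrib)
    finally show "(P0 (- u) - eps * c (- u) * eta 0) * (\<Prod>x\<in>G. lam Q0 Q1 (- u + x) * - eta (- (- u + x))) =
      (P0 u + eps * c u * eta 0) * ((-1) ^ card G * (\<Prod>x\<in>G. lam Q0 Q1 (u + - x) * eta (u + - x)))"
      using P0_even c_odd by simp
  qed
  also have "\<dots> = (-1) ^ card G * T (\<lambda>e. \<Prod>x\<in>G. e (- x)) eta"
    using T_prod[OF assms, of uminus] by (simp add: sum_distrib_left algebra_simps)
  finally show ?thesis .
qed

lemma T_S:
  assumes "walsh g" "eta \<in> Om"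
  shows "T g (Sm eta) = T (\<lambda>e. g (Sm e)) eta"
proof -
  obtain F a where r: "rep F a g" using assms unfolding walsh_def by blast
  have fin: "finite F" "\<forall>G\<in>F. finite G" using r unfolding rep_def by auto
  have "T g (Sm eta) = (\<Sum>G\<in>F. a G * T (Phi G) (Sm eta))" by (rule T_rep[OF r Sm_Om[OF assms(2)]])
  also have "\<dots> = (\<Sum>G\<in>F. (a G * (-1) ^ card G) * T (\<lambda>e. \<Prod>x\<in>G. e (- x)) eta)"
    using fin assms(2) by (intro sum.cong refl) (simp add: T_Phi_S)
  also have "\<dots> = T (\<lambda>e. \<Sum>G\<in>F. (a G * (-1) ^ card G) * (\<Prod>x\<in>G. e (- x))) eta"
    using fin assms(2) by (intro T_lin[symmetric]) (auto intro!: walsh_good walsh_prodv simp: inj_on_def)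
  also have "\<dots> = T (\<lambda>e. g (Sm e)) eta"
    using r unfolding rep_def by (intro T_cong) (auto simp: Sm_Om Phi_Sm intro!: sum.cong)
  finally show ?thesis .
qed

end

locale sett2 = sett P0 c eps Q0 Q1
  for P0 c :: "int^'d \<Rightarrow> real" and eps :: real and Q0 Q1 :: "real \<Rightarrow> real \<Rightarrow> real" +
  fixes rho :: "(int^'d \<Rightarrow> real) \<Rightarrow> real" and B M mubar :: real
  assumes rho_meas: "rho \<in> borel_measurable Pi0"
    and rho_bdd: "\<forall>eta. 0 \<le> rho eta \<and> rho eta \<le> B"
    and rho_prob: "(\<integral>eta. rho eta \<partial>Pi0) = 1"
    and rho_inv: "\<forall>A\<in>sets Pi0. (\<integral>eta. T (indicator A) eta * rho eta \<partial>Pi0)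
                                  = (\<integral>eta. indicator A eta * rho eta \<partial>Pi0)"
    and M: "M > 1"
    and mubar: "0 < mubar" "mubar < 1"
    and contr: "\<forall>f. in_HM M f \<and> (\<integral>eta. f eta * rho eta \<partial>Pi0) = 0
                      \<longrightarrow> normM M (T f) \<le> mubar * normM M f"
begin

definition mean :: "((int^'d \<Rightarrow> real) \<Rightarrow> real) \<Rightarrow> real" where
  "mean g = (\<integral>e. g e * rho e \<partial>Pi0)"

lemma rho_int: "integrable Pi0 rho"
  by (rule integrable_Pi0_bound[where K=B]) (use rho_meas rho_bdd in auto)

lemma integrable_rho:
  assumes "good g" shows "integrable Pi0 (\<lambda>e. g e * rho e)"
proof -
  obtain K where m: "g \<in> borel_measurable Pi0" and K: "\<forall>e\<in>Om. \<bar>g e\<bar> \<le> K"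
    using assms unfolding good_def by blast
  show ?thesis
  proof (rule integrable_Pi0_bound[where K="K * B"])
    show "(\<lambda>e. g e * rho e) \<in> borel_measurable Pi0" using m rho_meas by measurable
    show "\<forall>e\<in>Om. \<bar>g e * rho e\<bar> \<le> K * B"
      using K rho_bdd by (auto simp: abs_mult intro!: mult_mono)
  qed
qed

lemma mean_cong: "\<forall>e\<in>Om. f e = g e \<Longrightarrow> mean f = mean g"
  unfolding mean_def by (rule Bochner_Integration.integral_cong) (auto simp: space_Pi0)

lemma mean_add: "good f \<Longrightarrow> good g \<Longrightarrow> mean (\<lambda>e. f e + g e) = mean f + mean g"
  unfolding mean_def by (simp add: distrib_right integrable_rho)

lemma mean_scale: "mean (\<lambda>e. k * g e) = k * mean g"
  unfolding mean_def by (simp add: mult.assoc)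

lemma mean_const: "mean (\<lambda>_. k) = k"
  unfolding mean_def using rho_prob by simp

lemma mean_sum:
  assumes "finite I" "\<forall>i\<in>I. good (h i)"
  shows "mean (\<lambda>e. \<Sum>i\<in>I. h i e) = (\<Sum>i\<in>I. mean (h i))"
  unfolding mean_def using assms by (simp add: sum_distrib_right integrable_rho)

lemma mean_bound:
  assumes "good g" "\<forall>e\<in>Om. \<bar>g e\<bar> \<le> K"
  shows "\<bar>mean g\<bar> \<le> K"
proof -
  have i1: "integrable Pi0 (\<lambda>e. g e * rho e)" by (rule integrable_rho[OF assms(1)])
  have "\<bar>mean g\<bar> \<le> (\<integral>e. \<bar>g e * rho e\<bar> \<partial>Pi0)" unfolding mean_def by (rule integral_abs_bound)
  also have "\<dots> \<le> (\<integral>e. K * rho e \<partial>Pi0)"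
  proof (rule integral_mono_AE)
    show "integrable Pi0 (\<lambda>e. \<bar>g e * rho e\<bar>)" using i1 by simp
    show "integrable Pi0 (\<lambda>e. K * rho e)" using rho_int by simp
    show "AE e in Pi0. \<bar>g e * rho e\<bar> \<le> K * rho e"
      by (rule AE_I2) (use assms(2) rho_bdd in \<open>auto simp: space_Pi0 abs_mult intro!: mult_right_mono\<close>)
  qed
  also have "\<dots> = K" using rho_prob by simp
  finally show ?thesis .
qed

lemma mean_walsh_bound: assumes "walsh g" shows "\<bar>mean g\<bar> \<le> normM M g"
proof -
  have "\<forall>e\<in>Om. \<bar>g e\<bar> \<le> normM M g" using walsh_bound[OF assms] M by auto
  then show ?thesis by (rule mean_bound[OF walsh_good[OF assms]])
qed

lemma contr': "walsh g \<Longrightarrow> mean g = 0 \<Longrightarrow> normM M (T g) \<le> mubar * normM M g"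
  using contr in_HM_walsh unfolding mean_def by blast

lemma mean_T_Phi:
  assumes "finite G" shows "mean (T (Phi G)) = mean (Phi G)"
proof -
  define A where "A = Phi G -` {1} \<inter> space Pi0"
  have A: "A \<in> sets Pi0" unfolding A_def by (rule measurable_sets[OF Phi_meas]) simp
  have ind: "indicator A e = 1/2 * 1 + 1/2 * Phi G e" if "e \<in> Om" for e :: "int^'d \<Rightarrow> real"
    using Phi_pm[OF that, of G] that by (auto simp: A_def space_Pi0 indicator_def)
  have gP: "good (Phi G)" "good (\<lambda>_. 1/2::real)" using assms by (auto intro!: walsh_good walsh_Phi walsh_const)
  have gP2: "good (\<lambda>e. 1/2 * Phi G e)" by (rule good_scale[OF gP(1)])
  have Tind: "T (indicator A) eta = 1/2 + 1/2 * T (Phi G) eta" if "eta \<in> Om" for eta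
  proof -
    have "T (indicator A) eta = T (\<lambda>e. 1/2 + 1/2 * Phi G e) eta" by (rule T_cong) (simp add: ind)
    also have "\<dots> = T (\<lambda>_. 1/2) eta + T (\<lambda>e. 1/2 * Phi G e) eta" by (rule T_add[OF gP(2) gP2 that])
    also have "\<dots> = 1/2 + 1/2 * T (Phi G) eta" by (simp only: T_const[OF that] T_homog)
    finally show ?thesis .
  qed
  have gT: "good (T (Phi G))" using assms by (intro walsh_good walsh_T_Phi)
  have "mean (indicator A) = mean (\<lambda>e. 1/2 + 1/2 * Phi G e)" by (rule mean_cong) (simp add: ind)
  also have "\<dots> = 1/2 + 1/2 * mean (Phi G)" by (subst mean_add[OF gP(2) gP2]) (simp only: mean_const mean_scale)
  finally have m1: "mean (indicator A) = 1/2 + 1/2 * mean (Phi G)" .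
  have "mean (T (indicator A)) = mean (\<lambda>e. 1/2 + 1/2 * T (Phi G) e)" by (rule mean_cong) (simp add: Tind)
  also have "\<dots> = 1/2 + 1/2 * mean (T (Phi G))"
    by (subst mean_add[OF gP(2) good_scale[OF gT]]) (simp only: mean_const mean_scale)
  finally have m2: "mean (T (indicator A)) = 1/2 + 1/2 * mean (T (Phi G))" .
  have "mean (T (indicator A)) = mean (indicator A)" using rho_inv A unfolding mean_def by blast
  then show ?thesis using m1 m2 by simp
qed

lemma mean_T: assumes "walsh g" shows "mean (T g) = mean g"
proof -
  obtain F a where r: "rep F a g" using assms unfolding walsh_def by blast
  have fin: "finite F" "\<forall>G\<in>F. finite G" using r unfolding rep_def by auto
  have "mean (T g) = mean (\<lambda>e. \<Sum>G\<in>F. a G * T (Phi G) e)" by (rule mean_cong) (simp add: T_rep[OF r])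
  also have "\<dots> = (\<Sum>G\<in>F. a G * mean (T (Phi G)))"
  proof -
    have "\<forall>G\<in>F. good (\<lambda>e. a G * T (Phi G) e)" using fin by (intro ballI good_scale walsh_good walsh_T_Phi) auto
    then show ?thesis using fin by (simp add: mean_sum mean_scale)
  qed
  also have "\<dots> = (\<Sum>G\<in>F. a G * mean (Phi G))" using fin by (simp add: mean_T_Phi)
  also have "\<dots> = mean (\<lambda>e. \<Sum>G\<in>F. a G * Phi G e)"
  proof -
    have "\<forall>G\<in>F. good (\<lambda>e. a G * Phi G e)" using fin by (intro ballI good_scale walsh_good walsh_Phi) auto
    then show ?thesis using fin by (simp add: mean_sum mean_scale)
  qed
  also have "\<dots> = mean g" by (rule mean_cong) (use r in \<open>simp add: rep_def\<close>)
  finally show ?thesis .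
qed

end




lemma normM_cong:
  assumes "\<forall>e\<in>Om. f e = g e" shows "normM M f = normM M g"
proof -
  have "wcoeff f G = wcoeff g G" for G
    unfolding wcoeff_def by (rule Bochner_Integration.integral_cong) (use assms in \<open>auto simp: space_Pi0\<close>)
  then show ?thesis unfolding normM_def by simp
qed

lemma norm_sum:
  assumes "finite I" "\<forall>i\<in>I. walsh (h i)" "M \<ge> 0"
  shows "normM M (\<lambda>e. \<Sum>i\<in>I. h i e) \<le> (\<Sum>i\<in>I. normM M (h i))"
  using assms(1,2)
proof (induction I rule: finite_induct)
  case empty then show ?case by (simp add: norm_const)
next
  case (insert x F)
  have "normM M (\<lambda>e. \<Sum>i\<in>insert x F. h i e) = normM M (\<lambda>e. h x e + (\<Sum>i\<in>F. h i e))"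
    using insert.hyps by simp
  also have "\<dots> \<le> normM M (h x) + normM M (\<lambda>e. \<Sum>i\<in>F. h i e)"
    using insert.prems insert.hyps assms(3) by (intro norm_add walsh_sum) auto
  also have "\<dots> \<le> normM M (h x) + (\<Sum>i\<in>F. normM M (h i))"
    using insert by simp
  finally show ?case using insert.hyps by simp
qed

lemma Suc_img_vimage: "Suc ` (Suc -` (\<gamma>::nat set)) = \<gamma> - {0}"
proof (rule set_eqI)
  fix x show "x \<in> Suc ` (Suc -` \<gamma>) \<longleftrightarrow> x \<in> \<gamma> - {0}" by (cases x) auto
qed

lemma finite_Suc_vimage: "finite (\<gamma>::nat set) \<Longrightarrow> finite (Suc -` \<gamma>)"
  by (rule finite_vimageI) auto

lemma card_split_nat:
  assumes "finite (\<gamma>::nat set)"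
  shows "card \<gamma> = (if 0 \<in> \<gamma> then Suc (card (Suc -` \<gamma>)) else card (Suc -` \<gamma>))"
proof -
  have c: "card (Suc ` (Suc -` \<gamma>)) = card (Suc -` \<gamma>)" by (rule card_image) simp
  then have c': "card (\<gamma> - {0}) = card (Suc -` \<gamma>)" by (simp only: Suc_img_vimage)
  show ?thesis
  proof (cases "0 \<in> \<gamma>")
    case True
    have "card \<gamma> = Suc (card (\<gamma> - {0}))" by (rule card.remove[OF assms True])
    then show ?thesis using True c' by (simp only: if_True)
  next
    case False
    then have "\<gamma> - {0} = \<gamma>" by blast
    then show ?thesis using False c' by (simp only: if_False)
  qed
qed

lemma prod_split_nat:
  assumes "finite (\<gamma>::nat set)"
  shows "(\<Prod>t\<in>\<gamma>. f t) = (if 0 \<in> \<gamma> then f 0 else 1) * (\<Prod>t\<in>Suc -` \<gamma>. f (Suc t))"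
proof -
  have r: "(\<Prod>t\<in>Suc ` (Suc -` \<gamma>). f t) = (\<Prod>t\<in>Suc -` \<gamma>. f (Suc t))"
    by (rule prod.reindex_cong[of Suc]) auto
  then have r': "(\<Prod>t\<in>\<gamma> - {0}. f t) = (\<Prod>t\<in>Suc -` \<gamma>. f (Suc t))" by (simp only: Suc_img_vimage)
  show ?thesis
  proof (cases "0 \<in> \<gamma>")
    case True
    have "(\<Prod>t\<in>\<gamma>. f t) = f 0 * (\<Prod>t\<in>\<gamma> - {0}. f t)" by (rule prod.remove[OF assms True])
    then show ?thesis using True r' by (simp only: if_True)
  next
    case False
    then have "\<gamma> - {0} = \<gamma>" by blast
    then show ?thesis using False r' by (simp only: if_False mult_1)
  qed
qed

definition par :: "((int^'d \<Rightarrow> real) \<Rightarrow> real) \<Rightarrow> real \<Rightarrow> bool" where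
  "par g s \<longleftrightarrow> (\<forall>e\<in>Om. g (Sm e) = s * g e)"

lemma par_eta0: "par g s \<Longrightarrow> par (\<lambda>e. e 0 * g e) (- s)"
  unfolding par_def by (auto simp: Sm_def)

lemma walsh_pow: "walsh (\<lambda>e. e 0 ^ k)"
proof (induction k)
  case 0 then show ?case using walsh_const[of 1] by simp
next
  case (Suc k) then show ?case using walsh_eta0[OF Suc] by simp
qed

context sett2 begin

definition "mean' g = mean (\<lambda>e. g (Sm e))"

lemma mean'_T: assumes "walsh g" shows "mean' (T g) = mean' g"
proof -
  have "mean' (T g) = mean (T (\<lambda>e. g (Sm e)))"
    unfolding mean'_def by (rule mean_cong) (simp add: T_S[OF assms])
  also have "\<dots> = mean' g" unfolding mean'_def by (rule mean_T[OF walsh_S[OF assms]])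
  finally show ?thesis .
qed

lemma mean'_bound: assumes "walsh g" shows "\<bar>mean' g\<bar> \<le> normM M g"
proof -
  have "\<forall>e\<in>Om. \<bar>g (Sm e)\<bar> \<le> normM M g" by (intro ballI walsh_bound[OF assms]) (use M Sm_Om in auto)
  then show ?thesis unfolding mean'_def by (rule mean_bound[OF walsh_good[OF walsh_S[OF assms]]])
qed

lemma iter:
  assumes "walsh g" "mean g = 0"
  shows "walsh ((T ^^ k) g) \<and> mean ((T ^^ k) g) = 0 \<and> normM M ((T ^^ k) g) \<le> mubar ^ k * normM M g
         \<and> mean' ((T ^^ k) g) = mean' g"
proof (induction k)
  case 0 then show ?case using assms by simp
next
  case (Suc k)
  let ?h = "(T ^^ k) g"
  have w: "walsh ?h" and m: "mean ?h = 0" and n: "normM M ?h \<le> mubar ^ k * normM M g"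
    and m': "mean' ?h = mean' g" using Suc by auto
  have "normM M (T ?h) \<le> mubar * normM M ?h" by (rule contr'[OF w m])
  also have "\<dots> \<le> mubar * (mubar ^ k * normM M g)" using n mubar by (intro mult_left_mono) auto
  finally have nn: "normM M (T ?h) \<le> mubar ^ Suc k * normM M g" by (simp only: power_Suc mult.assoc)
  have eq: "(T ^^ Suc k) g = T ?h" by (simp only: funpow.simps comp_apply)
  show ?case unfolding eq
  proof (intro conjI)
    show "walsh (T ?h)" by (rule walsh_T[OF w])
    show "mean (T ?h) = 0" using mean_T[OF w] m by (rule trans)
    show "normM M (T ?h) \<le> mubar ^ Suc k * normM M g" by (rule nn)
    show "mean' (T ?h) = mean' g" using mean'_T[OF w] m' by (rule trans)
  qed
qed

lemma mean'_zero:
  assumes "walsh g" "mean g = 0" shows "mean' g = 0"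
proof (rule ccontr)
  assume ne: "mean' g \<noteq> 0"
  have b: "\<bar>mean' g\<bar> \<le> mubar ^ k * normM M g" for k
    using iter[OF assms, of k] mean'_bound[of "(T ^^ k) g"] by auto
  have N: "normM M g > 0"
    using b[of 0] ne by simp
  obtain k where "mubar ^ k < \<bar>mean' g\<bar> / normM M g"
    using real_arch_pow_inv[of "\<bar>mean' g\<bar> / normM M g" mubar] ne N mubar by auto
  then have "mubar ^ k * normM M g < \<bar>mean' g\<bar>" using N by (simp add: field_simps)
  with b[of k] show False by simp
qed

lemma mean'_eq:
  assumes "walsh g" shows "mean' g = mean g"
proof -
  let ?g0 = "\<lambda>e. g e + (- mean g)"
  have gg: "good g" "good (\<lambda>_. - mean g)" using assms by (auto intro: walsh_good walsh_const)
  have w0: "walsh ?g0" using assms by (intro walsh_add walsh_const)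
  have "mean ?g0 = 0" by (subst mean_add[OF gg]) (simp add: mean_const)
  then have "mean' ?g0 = 0" by (rule mean'_zero[OF w0])
  moreover have "mean' ?g0 = mean' g - mean g"
  proof -
    have g2: "good (\<lambda>e. g (Sm e))" by (rule walsh_good[OF walsh_S[OF assms]])
    show ?thesis unfolding mean'_def
      by (subst mean_add[OF g2 gg(2)]) (simp add: mean_const)
  qed
  ultimately show ?thesis by simp
qed

lemma odd_mean:
  assumes "walsh g" "par g (-1)" shows "mean g = 0"
proof -
  have "mean' g = mean (\<lambda>e. (-1) * g e)"
    unfolding mean'_def by (rule mean_cong) (use assms(2) in \<open>simp add: par_def\<close>)
  then have "mean' g = - mean g" by (simp add: mean_scale[of "-1" g, simplified])
  then show ?thesis using mean'_eq[OF assms(1)] by simp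
qed

lemma par_T: assumes "walsh g" "par g s" shows "par (T g) s"
  unfolding par_def
proof
  fix e :: "int^'d \<Rightarrow> real" assume e: "e \<in> Om"
  have "T g (Sm e) = T (\<lambda>e'. g (Sm e')) e" by (rule T_S[OF assms(1) e])
  also have "\<dots> = T (\<lambda>e'. s * g e') e" by (rule T_cong) (use assms(2) in \<open>simp add: par_def\<close>)
  also have "\<dots> = s * T g e" by (rule T_homog)
  finally show "T g (Sm e) = s * T g e" .
qed

end




context sett begin

lemma pathE_homog: "pathE T n (\<lambda>w. k * F w) eta = k * pathE T n F eta"
proof (induction n arbitrary: F eta)
  case 0 show ?case by simp
next
  case (Suc n)
  have "pathE T (Suc n) (\<lambda>w. k * F w) eta = T (\<lambda>eta'. pathE T n (\<lambda>w. k * F (case_nat eta w)) eta') eta" by simp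
  also have "\<dots> = T (\<lambda>eta'. k * pathE T n (\<lambda>w. F (case_nat eta w)) eta') eta" by (simp only: Suc.IH)
  also have "\<dots> = k * T (\<lambda>eta'. pathE T n (\<lambda>w. F (case_nat eta w)) eta') eta" by (rule T_homog)
  finally show ?case by simp
qed

definition GG :: "nat \<Rightarrow> nat set \<Rightarrow> (int^'d \<Rightarrow> real) \<Rightarrow> real" where
  "GG n \<gamma> = pathE T n (\<lambda>w. \<Prod>t\<in>\<gamma>. w t 0)"

lemma GG_0: "GG 0 \<gamma> eta = eta 0 ^ card \<gamma>"
  by (simp add: GG_def)

lemma case_split_prod:
  assumes "finite \<gamma>"
  shows "(\<Prod>t\<in>\<gamma>. case_nat eta w t 0) = (if 0 \<in> \<gamma> then eta 0 else 1) * (\<Prod>t\<in>Suc -` \<gamma>. w t 0)"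
  using prod_split_nat[OF assms, of "\<lambda>t. case_nat eta w t 0"] by simp

lemma GG_Suc:
  assumes "finite \<gamma>"
  shows "GG (Suc n) \<gamma> eta = (if 0 \<in> \<gamma> then eta 0 else 1) * T (GG n (Suc -` \<gamma>)) eta"
proof -
  have "GG (Suc n) \<gamma> eta = T (\<lambda>eta'. pathE T n (\<lambda>w. \<Prod>t\<in>\<gamma>. case_nat eta w t 0) eta') eta"
    by (simp add: GG_def)
  also have "\<dots> = T (\<lambda>eta'. pathE T n (\<lambda>w. (if 0 \<in> \<gamma> then eta 0 else 1) * (\<Prod>t\<in>Suc -` \<gamma>. w t 0)) eta') eta"
    by (simp only: case_split_prod[OF assms])
  also have "\<dots> = (if 0 \<in> \<gamma> then eta 0 else 1) * T (GG n (Suc -` \<gamma>)) eta"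
    by (simp only: pathE_homog T_homog GG_def)
  finally show ?thesis .
qed

lemma GG_Suc_fun:
  assumes "finite \<gamma>"
  shows "GG (Suc n) \<gamma> = (\<lambda>eta. (if 0 \<in> \<gamma> then eta 0 else 1) * T (GG n (Suc -` \<gamma>)) eta)"
  by (rule ext) (rule GG_Suc[OF assms])

lemma walsh_GG: "finite \<gamma> \<Longrightarrow> walsh (GG n \<gamma>)"
proof (induction n arbitrary: \<gamma>)
  case 0
  have "GG 0 \<gamma> = (\<lambda>e. e 0 ^ card \<gamma>)" by (rule ext) (rule GG_0)
  then show ?case using walsh_pow by simp
next
  case (Suc n)
  have w: "walsh (T (GG n (Suc -` \<gamma>)))" using Suc.IH finite_Suc_vimage[OF Suc.prems] walsh_T by blast
  show ?case
  proof (cases "0 \<in> \<gamma>")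
    case True
    then show ?thesis unfolding GG_Suc_fun[OF Suc.prems] using walsh_eta0[OF w] by simp
  next
    case False
    then show ?thesis unfolding GG_Suc_fun[OF Suc.prems] using w by simp
  qed
qed

lemma pathE_lin:
  assumes "eta \<in> Om" "finite I" "\<forall>i\<in>I. finite (\<gamma> i)"
  shows "pathE T n (\<lambda>w. \<Sum>i\<in>I. a i * (\<Prod>t\<in>\<gamma> i. w t 0)) eta = (\<Sum>i\<in>I. a i * GG n (\<gamma> i) eta)"
  using assms
proof (induction n arbitrary: a \<gamma> eta)
  case 0 then show ?case by (simp add: GG_def)
next
  case (Suc n)
  define cc where "cc i = (if 0 \<in> \<gamma> i then eta 0 else 1)" for i
  have "pathE T (Suc n) (\<lambda>w. \<Sum>i\<in>I. a i * (\<Prod>t\<in>\<gamma> i. w t 0)) eta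
     = T (\<lambda>eta'. pathE T n (\<lambda>w. \<Sum>i\<in>I. a i * (\<Prod>t\<in>\<gamma> i. case_nat eta w t 0)) eta') eta" by simp
  also have "\<dots> = T (\<lambda>eta'. pathE T n (\<lambda>w. \<Sum>i\<in>I. (a i * cc i) * (\<Prod>t\<in>Suc -` \<gamma> i. w t 0)) eta') eta"
  proof -
    have "(\<lambda>w. \<Sum>i\<in>I. a i * (\<Prod>t\<in>\<gamma> i. case_nat eta w t 0)) = (\<lambda>w. \<Sum>i\<in>I. (a i * cc i) * (\<Prod>t\<in>Suc -` \<gamma> i. w t 0))"
      using Suc.prems by (intro ext sum.cong refl) (simp add: case_split_prod cc_def)
    then show ?thesis by simp
  qed
  also have "\<dots> = T (\<lambda>eta'. \<Sum>i\<in>I. (a i * cc i) * GG n (Suc -` \<gamma> i) eta') eta"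
    using Suc.prems by (intro T_cong ballI Suc.IH) (auto intro: finite_Suc_vimage)
  also have "\<dots> = (\<Sum>i\<in>I. (a i * cc i) * T (GG n (Suc -` \<gamma> i)) eta)"
    using Suc.prems by (intro T_lin) (auto intro!: walsh_good walsh_GG finite_Suc_vimage)
  also have "\<dots> = (\<Sum>i\<in>I. a i * GG (Suc n) (\<gamma> i) eta)"
    using Suc.prems by (intro sum.cong refl) (simp add: GG_Suc cc_def)
  finally show ?case .
qed

end

context sett2 begin

lemma par_GG: "finite \<gamma> \<Longrightarrow> par (GG n \<gamma>) ((-1) ^ card \<gamma>)"
proof (induction n arbitrary: \<gamma>)
  case 0
  have "GG 0 \<gamma> = (\<lambda>e. e 0 ^ card \<gamma>)" by (rule ext) (rule GG_0)
  have h: "(- x) ^ k = (-1) ^ k * x ^ k" for x :: real and k :: nat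
    by (metis mult_minus1 power_mult_distrib)
  show ?case unfolding par_def
  proof
    fix e :: "int^'d \<Rightarrow> real" assume "e \<in> Om"
    have "GG 0 \<gamma> (Sm e) = (- e 0) ^ card \<gamma>" by (simp add: GG_0 Sm_def)
    also have "\<dots> = (-1) ^ card \<gamma> * e 0 ^ card \<gamma>" by (rule h)
    also have "\<dots> = (-1) ^ card \<gamma> * GG 0 \<gamma> e" by (simp only: GG_0)
    finally show "GG 0 \<gamma> (Sm e) = (-1) ^ card \<gamma> * GG 0 \<gamma> e" .
  qed
next
  case (Suc n)
  let ?g = "Suc -` \<gamma>"
  have f: "finite ?g" using finite_Suc_vimage[OF Suc.prems] .
  have p: "par (T (GG n ?g)) ((-1) ^ card ?g)" using par_T[OF walsh_GG[OF f] Suc.IH[OF f]] .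
  show ?case
  proof (cases "0 \<in> \<gamma>")
    case True
    have c: "card \<gamma> = Suc (card ?g)" using card_split_nat[OF Suc.prems] True by simp
    show ?thesis unfolding GG_Suc_fun[OF Suc.prems] using par_eta0[OF p] True c by simp
  next
    case False
    have c: "card \<gamma> = card ?g" using card_split_nat[OF Suc.prems] False by simp
    show ?thesis unfolding GG_Suc_fun[OF Suc.prems] using p False c by simp
  qed
qed

definition "xx = M * sqrt (mubar * (1 + 2 * mubar))"
definition "ko = M * (1 + 2 * mubar) / xx"

lemma xx_pos: "xx > 0"
  unfolding xx_def using M mubar by simp

lemma ko_xx: "ko * xx = M * (1 + 2 * mubar)"
  unfolding ko_def using xx_pos by simp

lemma Mmu_ko: "M * mubar * ko = xx"
proof -
  have s: "sqrt (mubar * (1 + 2 * mubar)) * sqrt (mubar * (1 + 2 * mubar)) = mubar * (1 + 2 * mubar)"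
    using mubar by simp
  define r where "r = sqrt (mubar * (1 + 2 * mubar))"
  have x: "xx = M * r" unfolding xx_def r_def ..
  have rr: "r * r = mubar * (1 + 2 * mubar)" using s unfolding r_def .
  have "M * mubar * ko = M * M * (mubar * (1 + 2 * mubar)) / xx" unfolding ko_def by (simp add: algebra_simps)
  also have "\<dots> = (M * r) * (M * r) / xx"
  proof -
    have "(M * r) * (M * r) = M * M * (r * r)" by (simp only: mult_ac)
    then show ?thesis using rr by simp
  qed
  also have "\<dots> = xx" using xx_pos unfolding x by simp
  finally show ?thesis .
qed

lemma mean0: assumes "walsh H" shows "mean (\<lambda>e. H e - mean H) = 0"
proof -
  have "mean (\<lambda>e. H e + (- mean H)) = mean H + mean (\<lambda>_. - mean H)"
    by (rule mean_add) (use assms in \<open>auto intro: walsh_good walsh_const\<close>)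
  then show ?thesis by (simp add: mean_const)
qed

lemma T_sub:
  assumes "walsh H" "e \<in> Om"
  shows "T (\<lambda>e. H e - k) e = T H e - k"
proof -
  have "T (\<lambda>e. H e + (- k)) e = T H e + T (\<lambda>_. - k) e"
    by (rule T_add) (use assms in \<open>auto intro: walsh_good walsh_const\<close>)
  then show ?thesis using T_const[OF assms(2)] by simp
qed

lemma T_split_norm:
  assumes "walsh H"
  shows "normM M (T H) \<le> \<bar>mean H\<bar> + mubar * normM M (\<lambda>e. H e - mean H)"
proof -
  let ?H0 = "\<lambda>e. H e - mean H"
  have w0: "walsh ?H0" using assms by (intro walsh_diff walsh_const)
  have "normM M (T H) = normM M (\<lambda>e. mean H + T ?H0 e)"
    by (rule normM_cong) (simp add: T_sub[OF assms])
  also have "\<dots> \<le> normM M (\<lambda>_::int^'d \<Rightarrow> real. mean H) + normM M (T ?H0)"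
    by (rule norm_add[OF walsh_const walsh_T[OF w0]]) (use M in simp)
  also have "\<dots> \<le> \<bar>mean H\<bar> + mubar * normM M ?H0"
    using contr'[OF w0 mean0[OF assms]] by (simp add: norm_const)
  finally show ?thesis .
qed

end




context sett2 begin

lemma GG_Suc_nz: "finite \<gamma> \<Longrightarrow> 0 \<notin> \<gamma> \<Longrightarrow> GG (Suc n) \<gamma> = T (GG n (Suc -` \<gamma>))"
  by (rule ext) (simp add: GG_Suc)

lemma GG_Suc_z: "finite \<gamma> \<Longrightarrow> 0 \<in> \<gamma> \<Longrightarrow> GG (Suc n) \<gamma> = (\<lambda>e. e 0 * T (GG n (Suc -` \<gamma>)) e)"
  by (rule ext) (simp add: GG_Suc)

lemma ko_pos: "ko > 0"
  unfolding ko_def using xx_pos M mubar by simp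

lemma inv:
  assumes "\<gamma> \<subseteq> {..n}"
  shows "(even (card \<gamma>) \<longrightarrow> \<bar>mean (GG n \<gamma>)\<bar> \<le> xx ^ card \<gamma> \<and>
            normM M (\<lambda>e. GG n \<gamma> e - mean (GG n \<gamma>)) \<le> 2 * xx ^ card \<gamma>) \<and>
         (odd (card \<gamma>) \<longrightarrow> normM M (GG n \<gamma>) \<le> ko * xx ^ card \<gamma>)"
  using assms
proof (induction n arbitrary: \<gamma>)
  case 0
  then have "\<gamma> = {} \<or> \<gamma> = {0}" by auto
  then show ?case
  proof
    assume g: "\<gamma> = {}"
    have G: "GG 0 {} = (\<lambda>_. 1)" by (rule ext) (simp add: GG_0)
    show ?thesis unfolding g G by (simp add: mean_const norm_const)
  next
    assume g: "\<gamma> = {0}"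
    have G: "GG 0 {0} = Phi {0}" by (rule ext) (simp add: GG_0 Phi_def)
    have "normM M (Phi {0::int^'d}) = M" using normM_rep[OF rep_Phi[of "{0::int^'d}"]] M by simp
    moreover have "M \<le> ko * xx" using ko_xx M mubar by simp
    ultimately show ?thesis unfolding g G by simp
  qed
next
  case (Suc n)
  have fin: "finite \<gamma>" using Suc.prems finite_subset by blast
  let ?g = "Suc -` \<gamma>"
  have sub: "?g \<subseteq> {..n}" using Suc.prems by auto
  have fg: "finite ?g" using finite_Suc_vimage[OF fin] .
  let ?H = "GG n ?g"
  note IH = Suc.IH[OF sub]
  have wH: "walsh ?H" by (rule walsh_GG[OF fg])
  have wTH: "walsh (T ?H)" by (rule walsh_T[OF wH])
  have mT: "mean (T ?H) = mean ?H" by (rule mean_T[OF wH])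
  have split: "normM M (T ?H) \<le> \<bar>mean ?H\<bar> + mubar * normM M (\<lambda>e. ?H e - mean ?H)"
    by (rule T_split_norm[OF wH])
  have oddmean: "mean ?H = 0" if "odd (card ?g)"
  proof -
    have "par ?H ((-1) ^ card ?g)" by (rule par_GG[OF fg])
    then have "par ?H (-1)" using that by simp
    then show ?thesis by (rule odd_mean[OF wH])
  qed
  have Nodd: "normM M (T ?H) \<le> mubar * normM M ?H" if "odd (card ?g)"
    by (rule contr'[OF wH oddmean[OF that]])
  have nnH: "normM M ?H \<ge> 0" using norm_nonneg[OF wH] M by simp
  have wH0: "walsh (\<lambda>e. ?H e - mean ?H)" by (rule walsh_diff[OF wH walsh_const])
  have nnH0: "normM M (\<lambda>e. ?H e - mean ?H) \<ge> 0" using norm_nonneg[OF wH0] M by simp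
  show ?case
  proof (cases "0 \<in> \<gamma>")
    case False
    have G: "GG (Suc n) \<gamma> = T ?H" by (rule GG_Suc_nz[OF fin False])
    have c: "card \<gamma> = card ?g" using card_split_nat[OF fin] False by simp
    show ?thesis
    proof (intro conjI impI)
      assume ev: "even (card \<gamma>)"
      then have ev': "even (card ?g)" using c by simp
      from IH ev' have i1: "\<bar>mean ?H\<bar> \<le> xx ^ card ?g"
        and i2: "normM M (\<lambda>e. ?H e - mean ?H) \<le> 2 * xx ^ card ?g" by auto
      show "\<bar>mean (GG (Suc n) \<gamma>)\<bar> \<le> xx ^ card \<gamma>" using i1 mT c G by simp
      have "normM M (\<lambda>e. GG (Suc n) \<gamma> e - mean (GG (Suc n) \<gamma>)) = normM M (T (\<lambda>e. ?H e - mean ?H))"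
        unfolding G mT by (rule normM_cong) (simp add: T_sub[OF wH])
      also have "\<dots> \<le> mubar * normM M (\<lambda>e. ?H e - mean ?H)"
        by (rule contr'[OF wH0 mean0[OF wH]])
      also have "\<dots> \<le> 1 * (2 * xx ^ card ?g)"
        by (rule mult_mono) (use mubar i2 nnH0 in auto)
      finally show "normM M (\<lambda>e. GG (Suc n) \<gamma> e - mean (GG (Suc n) \<gamma>)) \<le> 2 * xx ^ card \<gamma>" using c by simp
    next
      assume od: "odd (card \<gamma>)"
      then have od': "odd (card ?g)" using c by simp
      from IH od' have i: "normM M ?H \<le> ko * xx ^ card ?g" by auto
      have "normM M (GG (Suc n) \<gamma>) \<le> mubar * normM M ?H" unfolding G by (rule Nodd[OF od'])
      also have "\<dots> \<le> 1 * (ko * xx ^ card ?g)"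
        by (rule mult_mono) (use mubar i nnH in auto)
      finally show "normM M (GG (Suc n) \<gamma>) \<le> ko * xx ^ card \<gamma>" using c by simp
    qed
  next
    case True
    have G: "GG (Suc n) \<gamma> = (\<lambda>e. e 0 * T ?H e)" by (rule GG_Suc_z[OF fin True])
    have c: "card \<gamma> = Suc (card ?g)" using card_split_nat[OF fin] True by simp
    have wG: "walsh (GG (Suc n) \<gamma>)" unfolding G by (rule walsh_eta0[OF wTH])
    have NG: "normM M (GG (Suc n) \<gamma>) \<le> M * normM M (T ?H)"
      unfolding G by (rule norm_eta0[OF wTH]) (use M in simp)
    show ?thesis
    proof (intro conjI impI)
      assume ev: "even (card \<gamma>)"
      then have od': "odd (card ?g)" using c by simp
      from IH od' have i: "normM M ?H \<le> ko * xx ^ card ?g" by auto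
      have b: "normM M (GG (Suc n) \<gamma>) \<le> xx ^ card \<gamma>"
      proof -
        have "M * normM M (T ?H) \<le> M * (mubar * normM M ?H)"
          using Nodd[OF od'] M by (intro mult_left_mono) auto
        with NG have "normM M (GG (Suc n) \<gamma>) \<le> M * (mubar * normM M ?H)" by linarith
        also have "\<dots> \<le> M * (mubar * (ko * xx ^ card ?g))"
          using i M mubar by (intro mult_left_mono) auto
        also have "\<dots> = (M * mubar * ko) * xx ^ card ?g" by (simp add: algebra_simps)
        also have "\<dots> = xx ^ card \<gamma>" using c by (simp add: Mmu_ko)
        finally show ?thesis .
      qed
      have mb: "\<bar>mean (GG (Suc n) \<gamma>)\<bar> \<le> normM M (GG (Suc n) \<gamma>)" by (rule mean_walsh_bound[OF wG])
      show "\<bar>mean (GG (Suc n) \<gamma>)\<bar> \<le> xx ^ card \<gamma>" using mb b by simp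
      have "normM M (\<lambda>e. GG (Suc n) \<gamma> e - mean (GG (Suc n) \<gamma>))
          \<le> normM M (GG (Suc n) \<gamma>) + normM M (\<lambda>_::int^'d \<Rightarrow> real. mean (GG (Suc n) \<gamma>))"
        by (rule norm_diff[OF wG walsh_const]) (use M in simp)
      also have "\<dots> \<le> 2 * xx ^ card \<gamma>" using mb b by (simp add: norm_const)
      finally show "normM M (\<lambda>e. GG (Suc n) \<gamma> e - mean (GG (Suc n) \<gamma>)) \<le> 2 * xx ^ card \<gamma>" .
    next
      assume od: "odd (card \<gamma>)"
      then have ev': "even (card ?g)" using c by simp
      from IH ev' have i1: "\<bar>mean ?H\<bar> \<le> xx ^ card ?g"
        and i2: "normM M (\<lambda>e. ?H e - mean ?H) \<le> 2 * xx ^ card ?g" by auto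
      have "M * normM M (T ?H) \<le> M * (\<bar>mean ?H\<bar> + mubar * normM M (\<lambda>e. ?H e - mean ?H))"
        using split M by (intro mult_left_mono) auto
      also have "\<dots> \<le> M * (xx ^ card ?g + mubar * (2 * xx ^ card ?g))"
        using i1 i2 mubar M by (intro mult_left_mono add_mono) auto
      also have "\<dots> = (ko * xx) * xx ^ card ?g" by (simp add: ko_xx algebra_simps)
      also have "\<dots> = ko * xx ^ card \<gamma>" using c by simp
      finally show "normM M (GG (Suc n) \<gamma>) \<le> ko * xx ^ card \<gamma>" using NG by linarith
    qed
  qed
qed

lemma GG_bound:
  assumes "\<gamma> \<subseteq> {..n}"
  shows "normM M (GG n \<gamma>) \<le> max 3 ko * xx ^ card \<gamma>"
proof -
  have fin: "finite \<gamma>" using assms finite_subset by blast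
  have w: "walsh (GG n \<gamma>)" by (rule walsh_GG[OF fin])
  have xp: "xx ^ card \<gamma> \<ge> 0" using xx_pos by simp
  show ?thesis
  proof (cases "even (card \<gamma>)")
    case True
    let ?m = "mean (GG n \<gamma>)"
    from inv[OF assms] True have i1: "\<bar>?m\<bar> \<le> xx ^ card \<gamma>"
      and i2: "normM M (\<lambda>e. GG n \<gamma> e - ?m) \<le> 2 * xx ^ card \<gamma>" by auto
    have "normM M (GG n \<gamma>) = normM M (\<lambda>e. (GG n \<gamma> e - ?m) + ?m)" by (rule normM_cong) simp
    also have "\<dots> \<le> normM M (\<lambda>e. GG n \<gamma> e - ?m) + normM M (\<lambda>_::int^'d \<Rightarrow> real. ?m)"
      by (rule norm_add[OF walsh_diff[OF w walsh_const] walsh_const]) (use M in simp)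
    also have "\<dots> \<le> 3 * xx ^ card \<gamma>" using i1 i2 by (simp add: norm_const)
    also have "\<dots> \<le> max 3 ko * xx ^ card \<gamma>" by (rule mult_right_mono[OF _ xp]) simp
    finally show ?thesis .
  next
    case False
    from inv[OF assms] False have "normM M (GG n \<gamma>) \<le> ko * xx ^ card \<gamma>" by auto
    also have "\<dots> \<le> max 3 ko * xx ^ card \<gamma>" by (rule mult_right_mono[OF _ xp]) simp
    finally show ?thesis .
  qed
qed

lemma sum_pow_card: "finite A \<Longrightarrow> (\<Sum>X\<in>Pow A. (x::real) ^ card X) = (1 + x) ^ card A"
  using prod_add[of A "\<lambda>_. x" "\<lambda>_. 1"] by (simp add: add.commute)

lemma main:
  assumes "m \<ge> 1"
  shows "in_HM M (Gf T m fc) \<and>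
    normM M (Gf T m fc) \<le> max 3 ko * Max ((\<lambda>\<gamma>. \<bar>fc \<gamma>\<bar>) ` Pow {..<m}) * (1 + xx) ^ m"
proof -
  define n where "n = m - 1"
  have mn: "{..<m} = {..n}" using assms unfolding n_def by auto
  let ?Mx = "Max ((\<lambda>\<gamma>. \<bar>fc \<gamma>\<bar>) ` Pow {..<m})"
  have finP: "finite (Pow {..<m})" by simp
  have eq: "\<forall>e\<in>Om. Gf T m fc e = (\<Sum>\<gamma>\<in>Pow {..<m}. fc \<gamma> * GG n \<gamma> e)"
  proof
    fix e :: "int^'d \<Rightarrow> real" assume e: "e \<in> Om"
    show "Gf T m fc e = (\<Sum>\<gamma>\<in>Pow {..<m}. fc \<gamma> * GG n \<gamma> e)"
      unfolding Gf_def n_def[symmetric]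
      using pathE_lin[OF e finP, of "\<lambda>\<gamma>. \<gamma>" n fc] by (auto intro: finite_subset)
  qed
  have wterm: "walsh (\<lambda>e. fc \<gamma> * GG n \<gamma> e)" if "\<gamma> \<in> Pow {..<m}" for \<gamma>
    using that by (intro walsh_scale walsh_GG) (auto intro: finite_subset)
  have wsum: "walsh (\<lambda>e. \<Sum>\<gamma>\<in>Pow {..<m}. fc \<gamma> * GG n \<gamma> e)"
    using wterm by (intro walsh_sum) auto
  have wG: "walsh (Gf T m fc)" by (rule walsh_cong[OF wsum eq])
  have "normM M (Gf T m fc) = normM M (\<lambda>e. \<Sum>\<gamma>\<in>Pow {..<m}. fc \<gamma> * GG n \<gamma> e)" by (rule normM_cong[OF eq])
  also have "\<dots> \<le> (\<Sum>\<gamma>\<in>Pow {..<m}. normM M (\<lambda>e. fc \<gamma> * GG n \<gamma> e))"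
    by (rule norm_sum) (use wterm M in auto)
  also have "\<dots> = (\<Sum>\<gamma>\<in>Pow {..<m}. \<bar>fc \<gamma>\<bar> * normM M (GG n \<gamma>))"
    by (intro sum.cong refl norm_scale walsh_GG) (auto intro: finite_subset)
  also have "\<dots> \<le> (\<Sum>\<gamma>\<in>Pow {..<m}. ?Mx * (max 3 ko * xx ^ card \<gamma>))"
  proof (intro sum_mono mult_mono)
    fix \<gamma> assume g: "\<gamma> \<in> Pow {..<m}"
    show "\<bar>fc \<gamma>\<bar> \<le> ?Mx" using g by (intro Max_ge) auto
    show "normM M (GG n \<gamma>) \<le> max 3 ko * xx ^ card \<gamma>" using g mn by (intro GG_bound) auto
    show "0 \<le> ?Mx" using g by (intro order_trans[OF abs_ge_zero Max_ge]) auto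
    show "0 \<le> normM M (GG n \<gamma>)" using g M by (intro norm_nonneg walsh_GG) (auto intro: finite_subset)
  qed
  also have "\<dots> = max 3 ko * ?Mx * (\<Sum>\<gamma>\<in>Pow {..<m}. xx ^ card \<gamma>)"
    by (simp add: sum_distrib_left algebra_simps)
  also have "\<dots> = max 3 ko * ?Mx * (1 + xx) ^ m" by (simp add: sum_pow_card)
  finally show ?thesis using in_HM_walsh[OF wG] by simp
qed

end


theorem lemma1:
  fixes P0 c :: "int^'d \<Rightarrow> real" and eps M mubar B :: real
    and Q0 Q1 :: "real \<Rightarrow> real \<Rightarrow> real" and rho :: "(int^'d \<Rightarrow> real) \<Rightarrow> real"
  defines "T \<equiv> Top P0 c eps Q0 Q1"
  assumes eps: "eps > 0"
    and P0_nonneg: "\<forall>u. 0 \<le> P0 u"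
    and P0_fin: "finite {u. P0 u \<noteq> 0}"
    and P0_sum: "(\<Sum>u\<in>{u. P0 u \<noteq> 0}. P0 u) = 1"
    and P0_even: "\<forall>u. P0 (- u) = P0 u"
    and P0_aper: "\<forall>lam. (\<forall>i. - pi < lam $ i \<and> lam $ i \<le> pi) \<longrightarrow>
                      (cmod (ptilde P0 lam) = 1 \<longleftrightarrow> lam = 0)"
    and P0_nz: "\<forall>lam. ptilde P0 lam \<noteq> 0"
    and P0_inv: "(\<lambda>k. cmod (fourier_coeff (\<lambda>lam. 1 / ptilde P0 lam) k)) summable_on UNIV"
    and c_odd: "\<forall>u. c (- u) = - c u"
    and c_fin: "finite {u. c u \<noteq> 0}"
    and pc_range: "\<forall>u. 0 \<le> P0 u + eps * c u \<and> P0 u + eps * c u < 1 \<and>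
                       0 \<le> P0 u - eps * c u \<and> P0 u - eps * c u < 1"
    and Q0: "sym_stoch Q0" and Q1: "sym_stoch Q1"
    and mu: "0 < \<bar>second_eig Q0\<bar>" "\<bar>second_eig Q0\<bar> < 1"
    and M: "M > 1"
    and T_HM: "\<forall>f. in_HM M f \<longrightarrow> in_HM M (T f)"
    and rho_meas: "rho \<in> borel_measurable Pi0"
    and rho_bdd: "\<forall>eta. 0 \<le> rho eta \<and> rho eta \<le> B"
    and rho_prob: "(\<integral>eta. rho eta \<partial>Pi0) = 1"
    and rho_inv: "\<forall>A\<in>sets Pi0. (\<integral>eta. T (indicator A) eta * rho eta \<partial>Pi0)
                                  = (\<integral>eta. indicator A eta * rho eta \<partial>Pi0)"
    and mubar: "0 < mubar" "mubar < 1"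
    and contr: "\<forall>f. in_HM M f \<and> (\<integral>eta. f eta * rho eta \<partial>Pi0) = 0
                      \<longrightarrow> normM M (T f) \<le> mubar * normM M f"
  shows "\<exists>C>0. \<forall>m::nat. \<forall>fc :: nat set \<Rightarrow> real. m \<ge> 1 \<longrightarrow>
           in_HM M (Gf T m fc) \<and>
           normM M (Gf T m fc) \<le> C * Max ((\<lambda>\<gamma>. \<bar>fc \<gamma>\<bar>) ` Pow {..<m})
                                  * (1 + M * sqrt (mubar * (1 + 2 * mubar))) ^ m"
  proof -
  interpret sett2 P0 c eps Q0 Q1 rho B M mubar
  proof (unfold_locales)
    show "\<forall>A\<in>sets Pi0. (\<integral>eta. Top P0 c eps Q0 Q1 (indicator A) eta * rho eta \<partial>Pi0)
                                  = (\<integral>eta. indicator A eta * rho eta \<partial>Pi0)"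
      using rho_inv unfolding T_def .
    show "\<forall>f. in_HM M f \<and> (\<integral>eta. f eta * rho eta \<partial>Pi0) = 0
                      \<longrightarrow> normM M (Top P0 c eps Q0 Q1 f) \<le> mubar * normM M f"
      using contr unfolding T_def .
  qed (use P0_fin P0_sum P0_even c_odd c_fin Q0 Q1 rho_meas rho_bdd rho_prob M mubar in auto)
  show ?thesis
  proof (intro exI[of _ "max 3 ko"] conjI allI impI)
    show "0 < max 3 ko" by simp
    fix m :: nat and fc :: "nat set \<Rightarrow> real"
    assume m: "1 \<le> m"
    from main[OF m, of fc]
    show "in_HM M (Gf T m fc)" unfolding T_def by simp
    from main[OF m, of fc]
    show "normM M (Gf T m fc) \<le> max 3 ko * Max ((\<lambda>\<gamma>. \<bar>fc \<gamma>\<bar>) ` Pow {..<m})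
                                  * (1 + M * sqrt (mubar * (1 + 2 * mubar))) ^ m"
      unfolding T_def xx_def by simp
  qed
qed

end
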